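(* For every finite nonempty set of points $Z\subset\mathbb{S}_2$ and every positive integer $m$ one has $\alpha(mZ)<\alpha((m+5)Z)$.
   Context: Let $P_1,P_2\in\mathbb{P}^2(\mathbb{C})$ be two general (distinct) points and $f\colon\mathbb{S}_2\to\mathbb{P}^2$ the blow-up at them, with exceptional curves $E_i=f^{-1}(P_i)$; let $H$ be the pullback of the class of a line and $\mathbb{L}_2=3H-E_1-E_2=-K_{\mathbb{S}_2}$. For a finite set $Z\subset\mathbb{S}_2$ with ideal sheaf $\mathcal{I}_Z$ and a positive integer $m$, $\alpha(mZ)=\min\{d\ge 0:\ H^0(\mathbb{S}_2,d\mathbb{L}_2\otimes\mathcal{I}_Z^{(m)})\neq 0\}$, i.e. the least $d$ such that some effective divisor $D\in|d\mathbb{L}_2|$ has multiplicity at least $m$ at every point of $Z$. *)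

theory Defs
  imports Complex_Main
begin

text \<open>Plane curves are given by homogeneous polynomials in x,y,z over the complex
numbers, encoded by their coefficient function: F a b c is the coefficient of
x^a y^b z^c.  The blown-up points are P1 = [1:0:0] and P2 = [0:1:0]
(any two distinct points of the projective plane are projectively equivalent).\<close>

type_synonym poly3 = "nat \<Rightarrow> nat \<Rightarrow> nat \<Rightarrow> complex"
type_synonym poly2 = "nat \<Rightarrow> nat \<Rightarrow> complex"

definition homog_poly :: "nat \<Rightarrow> poly3 \<Rightarrow> bool" where
  "homog_poly n F \<longleftrightarrow> (\<forall>a b c. F a b c \<noteq> 0 \<longrightarrow> a + b + c = n)"

text \<open>Taylor coefficient of h^(i,j,k) in F(p+h), for F with all exponents at most n.\<close>
definition taylor3 :: "nat \<Rightarrow> poly3 \<Rightarrow> complex \<times> complex \<times> complex \<Rightarrow> nat \<Rightarrow> nat \<Rightarrow> nat \<Rightarrow> complex" where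
  "taylor3 n F p i j k =
     (\<Sum>a\<in>{0..n}. \<Sum>b\<in>{0..n}. \<Sum>c\<in>{0..n}.
        F a b c * of_nat (a choose i) * of_nat (b choose j) * of_nat (c choose k)
        * fst p ^ (a - i) * fst (snd p) ^ (b - j) * snd (snd p) ^ (c - k))"

definition mult3_ge :: "nat \<Rightarrow> poly3 \<Rightarrow> complex \<times> complex \<times> complex \<Rightarrow> nat \<Rightarrow> bool" where
  "mult3_ge n F p m \<longleftrightarrow> (\<forall>i j k. i + j + k < m \<longrightarrow> taylor3 n F p i j k = 0)"

definition taylor2 :: "nat \<Rightarrow> poly2 \<Rightarrow> complex \<times> complex \<Rightarrow> nat \<Rightarrow> nat \<Rightarrow> complex" where
  "taylor2 n h p i j =
     (\<Sum>a\<in>{0..n}. \<Sum>b\<in>{0..n}.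
        h a b * of_nat (a choose i) * of_nat (b choose j) * fst p ^ (a - i) * snd p ^ (b - j))"

definition mult2_ge :: "nat \<Rightarrow> poly2 \<Rightarrow> complex \<times> complex \<Rightarrow> nat \<Rightarrow> bool" where
  "mult2_ge n h p m \<longleftrightarrow> (\<forall>i j. i + j < m \<longrightarrow> taylor2 n h p i j = 0)"

text \<open>Points of S_2 (by representatives):
  Off (x,y,z): the point [x:y:z] of P^2 different from P1, P2;
  OnE1 (a,b): the point of E1 given by the tangent direction [a:b] at P1 in the
    affine coordinates (y,z) of the chart x = 1;
  OnE2 (a,b): the point of E2 given by the tangent direction [a:b] at P2 in the
    affine coordinates (x,z) of the chart y = 1.\<close>
datatype S2pt = Off "complex \<times> complex \<times> complex" | OnE1 "complex \<times> complex" | OnE2 "complex \<times> complex"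

fun valid_pt :: "S2pt \<Rightarrow> bool" where
  "valid_pt (Off (x, y, z)) \<longleftrightarrow> \<not> (y = 0 \<and> z = 0) \<and> \<not> (x = 0 \<and> z = 0)"
| "valid_pt (OnE1 (a, b)) \<longleftrightarrow> (a, b) \<noteq> (0, 0)"
| "valid_pt (OnE2 (a, b)) \<longleftrightarrow> (a, b) \<noteq> (0, 0)"

text \<open>Nonzero sections of d L_2 = d(3H - E1 - E2): nonzero forms of degree 3d with
multiplicity at least d at P1 and P2; the divisor is D = f^*C - d E1 - d E2.\<close>
definition section_dL :: "nat \<Rightarrow> poly3 \<Rightarrow> bool" where
  "section_dL d F \<longleftrightarrow> homog_poly (3 * d) F \<and> (\<exists>a b c. F a b c \<noteq> 0)
     \<and> mult3_ge (3 * d) F (1, 0, 0) d \<and> mult3_ge (3 * d) F (0, 1, 0) d"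

text \<open>mult_ge d F q m: the divisor D = f^*C - dE1 - dE2 of the section F of dL_2 has
multiplicity at least m at q.  At a point of E_i this means mult_q(f^*C) \<ge> m + d,
computed in the standard affine charts of the blow-up (u, t) \<mapsto> (u, u t) resp.
(v, s) \<mapsto> (v s, v).\<close>
fun mult_ge :: "nat \<Rightarrow> poly3 \<Rightarrow> S2pt \<Rightarrow> nat \<Rightarrow> bool" where
  "mult_ge d F (Off p) m = mult3_ge (3 * d) F p m"
| "mult_ge d F (OnE1 (a, b)) m =
     (if a \<noteq> 0 then
        mult2_ge (3 * d) (\<lambda>i j. if j \<le> i \<and> i \<le> 3 * d then F (3 * d - i) (i - j) j else 0) (0, b / a) (m + d)
      else
        mult2_ge (3 * d) (\<lambda>i j. if j \<le> i \<and> i \<le> 3 * d then F (3 * d - i) j (i - j) else 0) (0, 0) (m + d))"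
| "mult_ge d F (OnE2 (a, b)) m =
     (if a \<noteq> 0 then
        mult2_ge (3 * d) (\<lambda>i j. if j \<le> i \<and> i \<le> 3 * d then F (i - j) (3 * d - i) j else 0) (0, b / a) (m + d)
      else
        mult2_ge (3 * d) (\<lambda>i j. if j \<le> i \<and> i \<le> 3 * d then F j (3 * d - i) (i - j) else 0) (0, 0) (m + d))"

definition alpha :: "nat \<Rightarrow> S2pt set \<Rightarrow> nat" where
  "alpha m Z = (LEAST d. \<exists>F. section_dL d F \<and> (\<forall>q\<in>Z. mult_ge d F q m))"

end

theory Submission
  imports Defs
begin

definition tay1 :: "nat \<Rightarrow> (nat \<Rightarrow> complex) \<Rightarrow> complex \<Rightarrow> nat \<Rightarrow> complex" where
  "tay1 N g x i = (\<Sum>a\<in>{0..N}. g a * of_nat (a choose i) * x ^ (a - i))"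

lemma sum_single:
  assumes "finite S" "a \<in> S" "\<And>x. x \<in> S \<Longrightarrow> x \<noteq> a \<Longrightarrow> f x = 0"
  shows "sum f S = f a"
proof -
  have "sum f S = sum (\<lambda>x. if x = a then f a else 0) S"
    by (rule sum.cong) (auto simp: assms(3))
  also have "\<dots> = f a" using assms by simp
  finally show ?thesis .
qed

lemma tay1_d:
  "tay1 N (\<lambda>a. of_nat (Suc a) * g (Suc a)) x i = of_nat (Suc i) * tay1 (Suc N) g x (Suc i)"
proof -
  have "tay1 (Suc N) g x (Suc i) = (\<Sum>a\<in>{0..N}. g (Suc a) * of_nat (Suc a choose Suc i) * x ^ (Suc a - Suc i))"
    unfolding tay1_def by (subst sum.atLeast0_atMost_Suc_shift) (simp add: comp_def)
  hence "of_nat (Suc i) * tay1 (Suc N) g x (Suc i) = (\<Sum>a\<in>{0..N}. g (Suc a) * (of_nat (Suc i) * of_nat (Suc a choose Suc i)) * x ^ (a - i))"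
    by (simp add: sum_distrib_left mult_ac)
  also have "\<dots> = (\<Sum>a\<in>{0..N}. g (Suc a) * (of_nat (Suc a) * of_nat (a choose i)) * x ^ (a - i))"
  proof (rule sum.cong[OF refl])
    fix a
    have "Suc i * (Suc a choose Suc i) = Suc a * (a choose i)"
      using Suc_times_binomial_eq[of a i] by (simp add: mult_ac)
    hence "(of_nat (Suc i) * of_nat (Suc a choose Suc i) :: complex) = of_nat (Suc a) * of_nat (a choose i)"
      by (metis of_nat_mult)
    thus "g (Suc a) * (of_nat (Suc i) * of_nat (Suc a choose Suc i)) * x ^ (a - i) = g (Suc a) * (of_nat (Suc a) * of_nat (a choose i)) * x ^ (a - i)"
      by simp
  qed
  finally show ?thesis unfolding tay1_def by (simp add: mult_ac)
qed

lemma binom_pow_step: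
  "(of_nat (Suc a choose i) * x ^ (Suc a - i) :: complex) =
     x * (of_nat (a choose i) * x ^ (a - i)) + (if i = 0 then 0 else of_nat (a choose (i - 1)) * x ^ (a - (i - 1)))"
proof (cases i)
  case 0 thus ?thesis by simp
next
  case (Suc i')
  show ?thesis
  proof (cases "a < i'")
    case True thus ?thesis using Suc by (simp add: binomial_eq_0)
  next
    case False
    hence "a \<ge> i'" by simp
    show ?thesis
    proof (cases "a = i'")
      case True thus ?thesis using Suc by simp
    next
      case False
      hence "Suc a - Suc i' = Suc (a - Suc i')" using \<open>a \<ge> i'\<close> by simp
      thus ?thesis using Suc False \<open>a \<ge> i'\<close>
        by (simp add: algebra_simps Suc_diff_le)
    qed
  qed
qed

lemma tay1_m:
  "tay1 (Suc N) (\<lambda>a. if a = 0 then 0 else g (a - 1)) x i =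
     x * tay1 N g x i + (if i = 0 then 0 else tay1 N g x (i - 1))"
proof -
  have "tay1 (Suc N) (\<lambda>a. if a = 0 then 0 else g (a - 1)) x i =
        (\<Sum>a\<in>{0..N}. g a * (of_nat (Suc a choose i) * x ^ (Suc a - i)))"
    unfolding tay1_def by (subst sum.atLeast0_atMost_Suc_shift) (simp add: comp_def mult_ac)
  also have "\<dots> = (\<Sum>a\<in>{0..N}. x * (g a * of_nat (a choose i) * x ^ (a - i)) +
        (if i = 0 then 0 else g a * of_nat (a choose (i - 1)) * x ^ (a - (i - 1))))"
    by (rule sum.cong[OF refl]) (simp add: binom_pow_step algebra_simps)
  also have "\<dots> = x * tay1 N g x i + (if i = 0 then 0 else tay1 N g x (i - 1))"
    unfolding tay1_def by (simp add: sum.distrib sum_distrib_left)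
  finally show ?thesis .
qed

lemma tay1_bound:
  assumes "\<And>a. n < a \<Longrightarrow> g a = 0" "n \<le> N"
  shows "tay1 N g x i = tay1 n g x i"
  unfolding tay1_def
  by (rule sum.mono_neutral_right) (use assms in auto)

lemma tay1_zero: "(\<And>a. g a = 0) \<Longrightarrow> tay1 N g x i = 0"
  by (simp add: tay1_def)

lemma tay1_cmult: "tay1 N (\<lambda>a. c * g a) x i = c * tay1 N g x i"
  by (simp add: tay1_def sum_distrib_left mult_ac)

lemma tay1_add: "tay1 N (\<lambda>a. f a + g a) x i = tay1 N f x i + tay1 N g x i"
  by (simp add: tay1_def sum.distrib algebra_simps)

lemma tay1_cong: "(\<And>a. a \<le> N \<Longrightarrow> f a = g a) \<Longrightarrow> tay1 N f x i = tay1 N g x i"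
  by (simp add: tay1_def)

lemma tay1_mulid:
  "tay1 N (\<lambda>b. of_nat b * g b) t j = of_nat j * tay1 N g t j + of_nat (Suc j) * t * tay1 N g t (Suc j)"
proof -
  have key: "(of_nat b * of_nat (b choose j) * t ^ (b - j) :: complex) =
        of_nat j * (of_nat (b choose j) * t ^ (b - j)) + of_nat (Suc j) * t * (of_nat (b choose Suc j) * t ^ (b - Suc j))" for b
  proof (cases "b \<le> j")
    case True
    thus ?thesis by (cases "b = j") (auto simp: binomial_eq_0)
  next
    case False
    hence "b - j = Suc (b - Suc j)" by simp
    moreover have "(b - j) * (b choose j) = Suc j * (b choose Suc j)"
      by (simp only: binomial_absorption binomial_absorb_comp)
    hence "of_nat b * (of_nat (b choose j) :: complex) = of_nat j * of_nat (b choose j) + of_nat (Suc j) * of_nat (b choose Suc j)"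
    proof -
      assume h: "(b - j) * (b choose j) = Suc j * (b choose Suc j)"
      have "b * (b choose j) = j * (b choose j) + (b - j) * (b choose j)" using False
        by (metis add_diff_inverse_nat add_mult_distrib le_eq_less_or_eq nat_le_linear)
      hence "b * (b choose j) = j * (b choose j) + Suc j * (b choose Suc j)" using h by simp
      thus ?thesis by (metis of_nat_add of_nat_mult)
    qed
    ultimately show ?thesis by (simp add: algebra_simps)
  qed
  have "tay1 N (\<lambda>b. of_nat b * g b) t j = (\<Sum>b\<in>{0..N}. g b * (of_nat b * of_nat (b choose j) * t ^ (b - j)))"
    unfolding tay1_def by (simp add: mult_ac)
  also have "\<dots> = (\<Sum>b\<in>{0..N}. of_nat j * (g b * of_nat (b choose j) * t ^ (b - j)) + of_nat (Suc j) * t * (g b * of_nat (b choose Suc j) * t ^ (b - Suc j)))"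
    by (rule sum.cong[OF refl]) (simp only: key, simp add: algebra_simps)
  also have "\<dots> = of_nat j * tay1 N g t j + of_nat (Suc j) * t * tay1 N g t (Suc j)"
    unfolding tay1_def by (simp add: sum.distrib sum_distrib_left)
  finally show ?thesis .
qed

definition dx :: "poly3 \<Rightarrow> poly3" where "dx F = (\<lambda>a b c. of_nat (Suc a) * F (Suc a) b c)"
definition dy :: "poly3 \<Rightarrow> poly3" where "dy F = (\<lambda>a b c. of_nat (Suc b) * F a (Suc b) c)"
definition dz :: "poly3 \<Rightarrow> poly3" where "dz F = (\<lambda>a b c. of_nat (Suc c) * F a b (Suc c))"
definition mx :: "poly3 \<Rightarrow> poly3" where "mx F = (\<lambda>a b c. if a = 0 then 0 else F (a - 1) b c)"
definition my :: "poly3 \<Rightarrow> poly3" where "my F = (\<lambda>a b c. if b = 0 then 0 else F a (b - 1) c)"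
definition mz :: "poly3 \<Rightarrow> poly3" where "mz F = (\<lambda>a b c. if c = 0 then 0 else F a b (c - 1))"
definition lin :: "complex \<Rightarrow> complex \<Rightarrow> poly3 \<Rightarrow> poly3" where
  "lin \<alpha> \<beta> F = (\<lambda>a b c. \<alpha> * mx F a b c + \<beta> * mz F a b c)"

lemma homogD: "homog_poly n F \<Longrightarrow> F a b c \<noteq> 0 \<Longrightarrow> a + b + c = n"
  by (simp add: homog_poly_def)

lemma homog_dx: assumes "homog_poly n F" shows "homog_poly (n - 1) (dx F)"
  unfolding homog_poly_def dx_def
proof (intro allI impI)
  fix a b c assume "of_nat (Suc a) * F (Suc a) b c \<noteq> 0"
  hence "F (Suc a) b c \<noteq> 0" by auto
  from homogD[OF assms this] show "a + b + c = n - 1" by simp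
qed
lemma homog_dy: assumes "homog_poly n F" shows "homog_poly (n - 1) (dy F)"
  unfolding homog_poly_def dy_def
proof (intro allI impI)
  fix a b c assume "of_nat (Suc b) * F a (Suc b) c \<noteq> 0"
  hence "F a (Suc b) c \<noteq> 0" by auto
  from homogD[OF assms this] show "a + b + c = n - 1" by simp
qed
lemma homog_dz: assumes "homog_poly n F" shows "homog_poly (n - 1) (dz F)"
  unfolding homog_poly_def dz_def
proof (intro allI impI)
  fix a b c assume "of_nat (Suc c) * F a b (Suc c) \<noteq> 0"
  hence "F a b (Suc c) \<noteq> 0" by auto
  from homogD[OF assms this] show "a + b + c = n - 1" by simp
qed
lemma homog_mx: assumes "homog_poly n F" shows "homog_poly (Suc n) (mx F)"
  unfolding homog_poly_def mx_def
proof (intro allI impI)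
  fix a b c assume "(if a = 0 then 0 else F (a - 1) b c) \<noteq> 0"
  hence "a \<noteq> 0" "F (a - 1) b c \<noteq> 0" by (auto split: if_splits)
  with homogD[OF assms this(2)] show "a + b + c = Suc n" by simp
qed
lemma homog_my: assumes "homog_poly n F" shows "homog_poly (Suc n) (my F)"
  unfolding homog_poly_def my_def
proof (intro allI impI)
  fix a b c assume "(if b = 0 then 0 else F a (b - 1) c) \<noteq> 0"
  hence "b \<noteq> 0" "F a (b - 1) c \<noteq> 0" by (auto split: if_splits)
  with homogD[OF assms this(2)] show "a + b + c = Suc n" by simp
qed
lemma homog_mz: assumes "homog_poly n F" shows "homog_poly (Suc n) (mz F)"
  unfolding homog_poly_def mz_def
proof (intro allI impI)
  fix a b c assume "(if c = 0 then 0 else F a b (c - 1)) \<noteq> 0"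
  hence "c \<noteq> 0" "F a b (c - 1) \<noteq> 0" by (auto split: if_splits)
  with homogD[OF assms this(2)] show "a + b + c = Suc n" by simp
qed
lemma homog_lin: assumes "homog_poly n F" shows "homog_poly (Suc n) (lin \<alpha> \<beta> F)"
  unfolding homog_poly_def
proof (intro allI impI)
  fix a b c assume "lin \<alpha> \<beta> F a b c \<noteq> 0"
  hence "mx F a b c \<noteq> 0 \<or> mz F a b c \<noteq> 0" by (auto simp: lin_def)
  thus "a + b + c = Suc n"
    using homog_mx[OF assms] homog_mz[OF assms] unfolding homog_poly_def by blast
qed

lemma taylor3_nf:
  "taylor3 N F p i j k = tay1 N (\<lambda>a. tay1 N (\<lambda>b. tay1 N (\<lambda>c. F a b c) (snd (snd p)) k) (fst (snd p)) j) (fst p) i"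
  by (simp add: taylor3_def tay1_def sum_distrib_left sum_distrib_right mult_ac)

lemma homog_big: assumes "homog_poly n F" "n < a \<or> n < b \<or> n < c" shows "F a b c = 0"
proof (rule ccontr)
  assume "F a b c \<noteq> 0"
  from homogD[OF assms(1) this] assms(2) show False by auto
qed

lemma taylor3_bound:
  assumes h: "homog_poly n F" and nN: "n \<le> N"
  shows "taylor3 N F p i j k = taylor3 n F p i j k"
proof -
  define x y z where "x = fst p" "y = fst (snd p)" "z = snd (snd p)"
  have inner: "tay1 N (\<lambda>c. F a b c) z k = tay1 n (\<lambda>c. F a b c) z k" for a b
    by (rule tay1_bound) (use homog_big[OF h] nN in auto)
  have mid: "tay1 N (\<lambda>b. tay1 n (\<lambda>c. F a b c) z k) y j = tay1 n (\<lambda>b. tay1 n (\<lambda>c. F a b c) z k) y j" for a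
    by (rule tay1_bound) (auto intro!: tay1_zero simp: homog_big[OF h] nN)
  have outer: "tay1 N (\<lambda>a. tay1 n (\<lambda>b. tay1 n (\<lambda>c. F a b c) z k) y j) x i = tay1 n (\<lambda>a. tay1 n (\<lambda>b. tay1 n (\<lambda>c. F a b c) z k) y j) x i"
    by (rule tay1_bound) (auto intro!: tay1_zero simp: homog_big[OF h] nN)
  show ?thesis unfolding taylor3_nf x_y_z_def[symmetric] inner mid outer ..
qed

lemma T3_dx:
  assumes h: "homog_poly n F" and nN: "n < N"
  shows "taylor3 N (dx F) p i j k = of_nat (Suc i) * taylor3 N F p (Suc i) j k"
proof -
  define x y z where "x = fst p" "y = fst (snd p)" "z = snd (snd p)"
  define G where "G a = tay1 N (\<lambda>b. tay1 N (\<lambda>c. F a b c) z k) y j" for a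
  have "taylor3 N (dx F) p i j k = tay1 N (\<lambda>a. of_nat (Suc a) * G (Suc a)) x i"
    unfolding taylor3_nf x_y_z_def[symmetric] G_def dx_def by (simp add: tay1_cmult)
  also have "\<dots> = of_nat (Suc i) * tay1 (Suc N) G x (Suc i)" by (rule tay1_d)
  also have "tay1 (Suc N) G x (Suc i) = tay1 N G x (Suc i)"
    by (rule tay1_bound) (use nN in \<open>auto intro!: tay1_zero simp: G_def homog_big[OF h]\<close>)
  finally show ?thesis unfolding taylor3_nf x_y_z_def[symmetric] G_def .
qed

lemma T3_dy:
  assumes h: "homog_poly n F" and nN: "n < N"
  shows "taylor3 N (dy F) p i j k = of_nat (Suc j) * taylor3 N F p i (Suc j) k"
proof -
  define x y z where "x = fst p" "y = fst (snd p)" "z = snd (snd p)"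
  define H where "H a b = tay1 N (\<lambda>c. F a b c) z k" for a b
  have mid: "tay1 N (\<lambda>b. of_nat (Suc b) * H a (Suc b)) y j = of_nat (Suc j) * tay1 N (H a) y (Suc j)" for a
  proof -
    have "tay1 N (\<lambda>b. of_nat (Suc b) * H a (Suc b)) y j = of_nat (Suc j) * tay1 (Suc N) (H a) y (Suc j)"
      by (rule tay1_d)
    also have "tay1 (Suc N) (H a) y (Suc j) = tay1 N (H a) y (Suc j)"
      by (rule tay1_bound) (use nN in \<open>auto intro!: tay1_zero simp: H_def homog_big[OF h]\<close>)
    finally show ?thesis .
  qed
  have "taylor3 N (dy F) p i j k = tay1 N (\<lambda>a. tay1 N (\<lambda>b. of_nat (Suc b) * H a (Suc b)) y j) x i"
    unfolding taylor3_nf x_y_z_def[symmetric] H_def dy_def by (simp add: tay1_cmult)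
  also have "\<dots> = of_nat (Suc j) * tay1 N (\<lambda>a. tay1 N (H a) y (Suc j)) x i"
    unfolding mid by (rule tay1_cmult)
  finally show ?thesis unfolding taylor3_nf x_y_z_def[symmetric] H_def .
qed

lemma T3_dz:
  assumes h: "homog_poly n F" and nN: "n < N"
  shows "taylor3 N (dz F) p i j k = of_nat (Suc k) * taylor3 N F p i j (Suc k)"
proof -
  define x y z where "x = fst p" "y = fst (snd p)" "z = snd (snd p)"
  have inner: "tay1 N (\<lambda>c. of_nat (Suc c) * F a b (Suc c)) z k = of_nat (Suc k) * tay1 N (\<lambda>c. F a b c) z (Suc k)" for a b
  proof -
    have "tay1 N (\<lambda>c. of_nat (Suc c) * F a b (Suc c)) z k = of_nat (Suc k) * tay1 (Suc N) (\<lambda>c. F a b c) z (Suc k)"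
      by (rule tay1_d)
    also have "tay1 (Suc N) (\<lambda>c. F a b c) z (Suc k) = tay1 N (\<lambda>c. F a b c) z (Suc k)"
      by (rule tay1_bound) (use nN in \<open>auto simp: homog_big[OF h]\<close>)
    finally show ?thesis .
  qed
  show ?thesis
    unfolding taylor3_nf x_y_z_def[symmetric] dz_def inner by (simp add: tay1_cmult)
qed

lemma tay1_if0: "tay1 N (\<lambda>c. if P then 0 else f c) x i = (if P then 0 else tay1 N f x i)"
  by (simp add: tay1_def)

lemma T3_mx:
  assumes h: "homog_poly n F" and nN: "n < N"
  shows "taylor3 N (mx F) p i j k = fst p * taylor3 N F p i j k + (if i = 0 then 0 else taylor3 N F p (i - 1) j k)"
proof -
  define x y z where "x = fst p" "y = fst (snd p)" "z = snd (snd p)"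
  define G where "G a = tay1 N (\<lambda>b. tay1 N (\<lambda>c. F a b c) z k) y j" for a
  obtain N' where N': "N = Suc N'" using nN by (cases N) auto
  have eqN: "\<And>i'. tay1 N' G x i' = tay1 N G x i'"
    by (rule tay1_bound[symmetric]) (use nN N' in \<open>auto intro!: tay1_zero simp: G_def homog_big[OF h]\<close>)
  have "taylor3 N (mx F) p i j k = tay1 (Suc N') (\<lambda>a. if a = 0 then 0 else G (a - 1)) x i"
    unfolding taylor3_nf x_y_z_def[symmetric] G_def mx_def N' by (simp add: tay1_if0)
  also have "\<dots> = x * tay1 N' G x i + (if i = 0 then 0 else tay1 N' G x (i - 1))" by (rule tay1_m)
  also have "\<dots> = x * tay1 N G x i + (if i = 0 then 0 else tay1 N G x (i - 1))"
    by (simp only: eqN)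
  finally show ?thesis unfolding taylor3_nf x_y_z_def[symmetric] G_def by simp
qed

lemma T3_my:
  assumes h: "homog_poly n F" and nN: "n < N"
  shows "taylor3 N (my F) p i j k = fst (snd p) * taylor3 N F p i j k + (if j = 0 then 0 else taylor3 N F p i (j - 1) k)"
proof -
  define x y z where "x = fst p" "y = fst (snd p)" "z = snd (snd p)"
  define H where "H a b = tay1 N (\<lambda>c. F a b c) z k" for a b
  obtain N' where N': "N = Suc N'" using nN by (cases N) auto
  have mid: "tay1 (Suc N') (\<lambda>b. if b = 0 then 0 else H a (b - 1)) y j' = y * tay1 N (H a) y j' + (if j' = 0 then 0 else tay1 N (H a) y (j' - 1))" for a j'
  proof -
    have eqN: "\<And>i'. tay1 N' (H a) y i' = tay1 N (H a) y i'"
      by (rule tay1_bound[symmetric]) (use nN N' in \<open>auto intro!: tay1_zero simp: H_def homog_big[OF h]\<close>)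
    have "tay1 (Suc N') (\<lambda>b. if b = 0 then 0 else H a (b - 1)) y j' = y * tay1 N' (H a) y j' + (if j' = 0 then 0 else tay1 N' (H a) y (j' - 1))"
      by (rule tay1_m)
    thus ?thesis by (simp only: eqN)
  qed
  have "taylor3 N (my F) p i j k = tay1 N (\<lambda>a. tay1 (Suc N') (\<lambda>b. if b = 0 then 0 else H a (b - 1)) y j) x i"
    unfolding taylor3_nf x_y_z_def[symmetric] H_def my_def N' by (simp add: tay1_if0)
  also have "\<dots> = tay1 N (\<lambda>a. y * tay1 N (H a) y j + (if j = 0 then 0 else tay1 N (H a) y (j - 1))) x i"
    unfolding mid ..
  also have "\<dots> = y * tay1 N (\<lambda>a. tay1 N (H a) y j) x i + (if j = 0 then 0 else tay1 N (\<lambda>a. tay1 N (H a) y (j - 1)) x i)"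
    by (simp add: tay1_add tay1_cmult tay1_if0)
  finally show ?thesis unfolding taylor3_nf x_y_z_def[symmetric] H_def by simp
qed

lemma T3_mz:
  assumes h: "homog_poly n F" and nN: "n < N"
  shows "taylor3 N (mz F) p i j k = snd (snd p) * taylor3 N F p i j k + (if k = 0 then 0 else taylor3 N F p i j (k - 1))"
proof -
  define x y z where "x = fst p" "y = fst (snd p)" "z = snd (snd p)"
  obtain N' where N': "N = Suc N'" using nN by (cases N) auto
  have inner: "tay1 (Suc N') (\<lambda>c. if c = 0 then 0 else F a b (c - 1)) z k' = z * tay1 N (\<lambda>c. F a b c) z k' + (if k' = 0 then 0 else tay1 N (\<lambda>c. F a b c) z (k' - 1))" for a b k'
  proof -
    have eqN: "\<And>i'. tay1 N' (\<lambda>c. F a b c) z i' = tay1 N (\<lambda>c. F a b c) z i'"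
      by (rule tay1_bound[symmetric]) (use nN N' in \<open>auto simp: homog_big[OF h]\<close>)
    have "tay1 (Suc N') (\<lambda>c. if c = 0 then 0 else F a b (c - 1)) z k' = z * tay1 N' (\<lambda>c. F a b c) z k' + (if k' = 0 then 0 else tay1 N' (\<lambda>c. F a b c) z (k' - 1))"
      by (rule tay1_m)
    thus ?thesis by (simp only: eqN)
  qed
  have "taylor3 N (mz F) p i j k = tay1 N (\<lambda>a. tay1 N (\<lambda>b. tay1 (Suc N') (\<lambda>c. if c = 0 then 0 else F a b (c - 1)) z k) y j) x i"
    unfolding taylor3_nf x_y_z_def[symmetric] mz_def N' ..
  also have "\<dots> = z * taylor3 N F p i j k + (if k = 0 then 0 else taylor3 N F p i j (k - 1))"
    unfolding inner taylor3_nf x_y_z_def[symmetric]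
    by (simp add: tay1_add tay1_cmult tay1_if0)
  finally show ?thesis by (simp add: x_y_z_def)
qed

lemma T3_lincomb:
  "taylor3 N (\<lambda>a b c. \<alpha> * A a b c + \<beta> * B a b c) p i j k = \<alpha> * taylor3 N A p i j k + \<beta> * taylor3 N B p i j k"
  by (simp add: taylor3_def algebra_simps sum.distrib sum_distrib_left)

lemma tay1_low:
  assumes "\<And>a. i \<le> a \<Longrightarrow> a \<le> N \<Longrightarrow> a \<noteq> i \<Longrightarrow> g a = 0" "i \<le> N"
  shows "tay1 N g x i = g i"
  unfolding tay1_def
  by (subst sum_single[where a = i]) (use assms in \<open>auto simp: binomial_eq_0 not_le\<close>)

lemma tay1_low0:
  assumes "\<And>a. i \<le> a \<Longrightarrow> a \<le> N \<Longrightarrow> g a = 0"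
  shows "tay1 N g x i = 0"
  unfolding tay1_def
  by (rule sum.neutral) (use assms in \<open>auto simp: binomial_eq_0 not_le\<close>)

lemma tay1_at0: "tay1 N g 0 j = (if j \<le> N then g j else 0)"
proof (cases "j \<le> N")
  case True
  have "tay1 N g 0 j = (\<Sum>a\<in>{0..N}. if a = j then g j else 0)"
    unfolding tay1_def
    by (rule sum.cong[OF refl]) (auto simp: binomial_eq_0 not_le)
  thus ?thesis using True by simp
next
  case False
  thus ?thesis unfolding tay1_def
    by (auto intro!: sum.neutral simp: binomial_eq_0)
qed

lemma tay1_zero' [simp]: "tay1 N (\<lambda>a. 0) x i = 0"
  by (simp add: tay1_def)

lemma tay1_if0': "tay1 N (\<lambda>c. if P then f c else 0) x i = (if P then tay1 N f x i else 0)"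
  by (simp add: tay1_def)

lemma homog_uniq:
  assumes h: "homog_poly n F" and F: "F a b c \<noteq> 0"
  shows "a' \<noteq> a \<Longrightarrow> F a' b c = 0" "b' \<noteq> b \<Longrightarrow> F a b' c = 0" "c' \<noteq> c \<Longrightarrow> F a b c' = 0"
  using homogD[OF h F] homogD[OF h, of a' b c] homogD[OF h, of a b' c] homogD[OF h, of a b c'] by auto

lemma tay1_diff: "tay1 N (\<lambda>a. f a - g a) x i = tay1 N f x i - tay1 N g x i"
  by (simp add: tay1_def sum_subtractf algebra_simps)

lemma mult3_mono: "mult3_ge n F p M \<Longrightarrow> M' \<le> M \<Longrightarrow> mult3_ge n F p M'"
  by (auto simp: mult3_ge_def)

lemma M3_dx:
  assumes h: "homog_poly n F" and m: "mult3_ge n F p M"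
  shows "mult3_ge (n - 1) (dx F) p (M - 1)"
  unfolding mult3_ge_def
proof (intro allI impI)
  fix i j k assume ijk: "i + j + k < M - 1"
  have "taylor3 (n - 1) (dx F) p i j k = taylor3 (Suc n) (dx F) p i j k"
    by (rule taylor3_bound[symmetric, OF homog_dx[OF h]]) simp
  also have "\<dots> = of_nat (Suc i) * taylor3 (Suc n) F p (Suc i) j k" by (rule T3_dx[OF h]) simp
  also have "taylor3 (Suc n) F p (Suc i) j k = taylor3 n F p (Suc i) j k" by (rule taylor3_bound[OF h]) simp
  also have "\<dots> = 0" using m ijk by (simp add: mult3_ge_def)
  finally show "taylor3 (n - 1) (dx F) p i j k = 0" by simp
qed

lemma M3_dy:
  assumes h: "homog_poly n F" and m: "mult3_ge n F p M"
  shows "mult3_ge (n - 1) (dy F) p (M - 1)"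
  unfolding mult3_ge_def
proof (intro allI impI)
  fix i j k assume ijk: "i + j + k < M - 1"
  have "taylor3 (n - 1) (dy F) p i j k = taylor3 (Suc n) (dy F) p i j k"
    by (rule taylor3_bound[symmetric, OF homog_dy[OF h]]) simp
  also have "\<dots> = of_nat (Suc j) * taylor3 (Suc n) F p i (Suc j) k" by (rule T3_dy[OF h]) simp
  also have "taylor3 (Suc n) F p i (Suc j) k = taylor3 n F p i (Suc j) k" by (rule taylor3_bound[OF h]) simp
  also have "\<dots> = 0" using m ijk by (simp add: mult3_ge_def)
  finally show "taylor3 (n - 1) (dy F) p i j k = 0" by simp
qed

lemma M3_dz:
  assumes h: "homog_poly n F" and m: "mult3_ge n F p M"
  shows "mult3_ge (n - 1) (dz F) p (M - 1)"
  unfolding mult3_ge_def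
proof (intro allI impI)
  fix i j k assume ijk: "i + j + k < M - 1"
  have "taylor3 (n - 1) (dz F) p i j k = taylor3 (Suc n) (dz F) p i j k"
    by (rule taylor3_bound[symmetric, OF homog_dz[OF h]]) simp
  also have "\<dots> = of_nat (Suc k) * taylor3 (Suc n) F p i j (Suc k)" by (rule T3_dz[OF h]) simp
  also have "taylor3 (Suc n) F p i j (Suc k) = taylor3 n F p i j (Suc k)" by (rule taylor3_bound[OF h]) simp
  also have "\<dots> = 0" using m ijk by (simp add: mult3_ge_def)
  finally show "taylor3 (n - 1) (dz F) p i j k = 0" by simp
qed

lemma M3_mx:
  assumes h: "homog_poly n F" and m: "mult3_ge n F p M"
  shows "mult3_ge (Suc n) (mx F) p (if fst p = 0 then Suc M else M)"
  unfolding mult3_ge_def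
proof (intro allI impI)
  fix i j k assume ijk: "i + j + k < (if fst p = 0 then Suc M else M)"
  have e: "taylor3 (Suc n) F p i' j' k' = taylor3 n F p i' j' k'" for i' j' k'
    by (rule taylor3_bound[OF h]) simp
  have "taylor3 (Suc n) (mx F) p i j k = fst p * taylor3 n F p i j k + (if i = 0 then 0 else taylor3 n F p (i - 1) j k)"
    using T3_mx[OF h, of "Suc n"] by (simp add: e)
  also have "\<dots> = 0"
  proof -
    have t1: "fst p * taylor3 n F p i j k = 0"
    proof (cases "fst p = 0")
      case False
      hence "i + j + k < M" using ijk by simp
      hence "taylor3 n F p i j k = 0" using m unfolding mult3_ge_def by blast
      thus ?thesis by simp
    qed simp
    have t2: "(if i = 0 then 0 else taylor3 n F p (i - 1) j k) = 0"
    proof (cases "i = 0")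
      case False
      hence "i - 1 + j + k < M" using ijk by (auto split: if_splits)
      hence "taylor3 n F p (i - 1) j k = 0" using m unfolding mult3_ge_def by blast
      thus ?thesis by simp
    qed simp
    show ?thesis by (simp only: t1 t2) simp
  qed
  finally show "taylor3 (Suc n) (mx F) p i j k = 0" .
qed

lemma M3_my:
  assumes h: "homog_poly n F" and m: "mult3_ge n F p M"
  shows "mult3_ge (Suc n) (my F) p (if fst (snd p) = 0 then Suc M else M)"
  unfolding mult3_ge_def
proof (intro allI impI)
  fix i j k assume ijk: "i + j + k < (if fst (snd p) = 0 then Suc M else M)"
  have e: "taylor3 (Suc n) F p i' j' k' = taylor3 n F p i' j' k'" for i' j' k'
    by (rule taylor3_bound[OF h]) simp
  have "taylor3 (Suc n) (my F) p i j k = fst (snd p) * taylor3 n F p i j k + (if j = 0 then 0 else taylor3 n F p i (j - 1) k)"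
    using T3_my[OF h, of "Suc n"] by (simp add: e)
  also have "\<dots> = 0"
  proof -
    have t1: "fst (snd p) * taylor3 n F p i j k = 0"
    proof (cases "fst (snd p) = 0")
      case False
      hence "i + j + k < M" using ijk by simp
      hence "taylor3 n F p i j k = 0" using m unfolding mult3_ge_def by blast
      thus ?thesis by simp
    qed simp
    have t2: "(if j = 0 then 0 else taylor3 n F p i (j - 1) k) = 0"
    proof (cases "j = 0")
      case False
      hence "i + (j - 1) + k < M" using ijk by (auto split: if_splits)
      hence "taylor3 n F p i (j - 1) k = 0" using m unfolding mult3_ge_def by blast
      thus ?thesis by simp
    qed simp
    show ?thesis by (simp only: t1 t2) simp
  qed
  finally show "taylor3 (Suc n) (my F) p i j k = 0" .
qed

lemma alg3: "(\<alpha>::complex) * (x * T + A) + \<beta> * (z * T + B) = (\<alpha> * x + \<beta> * z) * T + \<alpha> * A + \<beta> * B"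
  by (simp add: algebra_simps)

lemma M3_lin:
  assumes h: "homog_poly n F" and m: "mult3_ge n F p M"
  shows "mult3_ge (Suc n) (lin \<alpha> \<beta> F) p (if \<alpha> * fst p + \<beta> * snd (snd p) = 0 then Suc M else M)"
  unfolding mult3_ge_def
proof (intro allI impI)
  fix i j k assume ijk: "i + j + k < (if \<alpha> * fst p + \<beta> * snd (snd p) = 0 then Suc M else M)"
  have e: "taylor3 (Suc n) F p i' j' k' = taylor3 n F p i' j' k'" for i' j' k'
    by (rule taylor3_bound[OF h]) simp
  have "taylor3 (Suc n) (lin \<alpha> \<beta> F) p i j k = \<alpha> * taylor3 (Suc n) (mx F) p i j k + \<beta> * taylor3 (Suc n) (mz F) p i j k"
    unfolding lin_def by (rule T3_lincomb)
  also have "\<dots> = \<alpha> * (fst p * taylor3 n F p i j k + (if i = 0 then 0 else taylor3 n F p (i - 1) j k))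
       + \<beta> * (snd (snd p) * taylor3 n F p i j k + (if k = 0 then 0 else taylor3 n F p i j (k - 1)))"
    using T3_mx[OF h, of "Suc n"] T3_mz[OF h, of "Suc n"] by (simp only: e)
  also have "\<dots> = (\<alpha> * fst p + \<beta> * snd (snd p)) * taylor3 n F p i j k
       + \<alpha> * (if i = 0 then 0 else taylor3 n F p (i - 1) j k) + \<beta> * (if k = 0 then 0 else taylor3 n F p i j (k - 1))"
    by (rule alg3)
  also have "\<dots> = 0"
  proof -
    have t1: "(\<alpha> * fst p + \<beta> * snd (snd p)) * taylor3 n F p i j k = 0"
    proof (cases "\<alpha> * fst p + \<beta> * snd (snd p) = 0")
      case False
      hence "i + j + k < M" using ijk by simp
      hence "taylor3 n F p i j k = 0" using m unfolding mult3_ge_def by blast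
      thus ?thesis by simp
    qed simp
    have t2: "(if i = 0 then 0 else taylor3 n F p (i - 1) j k) = 0"
    proof (cases "i = 0")
      case False
      hence "i - 1 + j + k < M" using ijk by (auto split: if_splits)
      hence "taylor3 n F p (i - 1) j k = 0" using m unfolding mult3_ge_def by blast
      thus ?thesis by simp
    qed simp
    have t3: "(if k = 0 then 0 else taylor3 n F p i j (k - 1)) = 0"
    proof (cases "k = 0")
      case False
      hence "i + j + (k - 1) < M" using ijk by (auto split: if_splits)
      hence "taylor3 n F p i j (k - 1) = 0" using m unfolding mult3_ge_def by blast
      thus ?thesis by simp
    qed simp
    show ?thesis by (simp only: t1 t2 t3) simp
  qed
  finally show "taylor3 (Suc n) (lin \<alpha> \<beta> F) p i j k = 0" .
qed

lemma mult3_bound_eq: assumes h: "homog_poly n F" and nN: "n \<le> N" shows "mult3_ge N F p M = mult3_ge n F p M"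
  unfolding mult3_ge_def using taylor3_bound[OF h nN] by simp

lemma taylor3_P1: "taylor3 n F (1, 0, 0) i j k = (if j \<le> n \<and> k \<le> n then tay1 n (\<lambda>a. F a j k) 1 i else 0)"
  by (simp add: taylor3_nf tay1_at0 tay1_if0 tay1_if0' del: One_nat_def)

lemma taylor3_P2: "taylor3 n F (0, 1, 0) i j k = (if i \<le> n \<and> k \<le> n then tay1 n (\<lambda>b. F i b k) 1 j else 0)"
  by (simp add: taylor3_nf tay1_at0 tay1_if0 tay1_if0')

lemma P1_char:
  assumes h: "homog_poly n F"
  shows "mult3_ge n F (1, 0, 0) M \<longleftrightarrow> (\<forall>a b c. F a b c \<noteq> 0 \<longrightarrow> M \<le> b + c)"
proof
  assume m: "mult3_ge n F (1, 0, 0) M"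
  show "\<forall>a b c. F a b c \<noteq> 0 \<longrightarrow> M \<le> b + c"
  proof (intro allI impI, rule ccontr)
    fix a b c assume F: "F a b c \<noteq> 0" and "\<not> M \<le> b + c"
    hence lt: "0 + b + c < M" by simp
    have s: "a + b + c = n" using homogD[OF h F] .
    have "tay1 n (\<lambda>a'. F a' b c) 1 0 = (\<Sum>a'\<in>{0..n}. F a' b c)" by (simp add: tay1_def)
    also have "\<dots> = F a b c"
      by (rule sum_single) (use s homog_uniq[OF h F] in \<open>auto\<close>)
    finally have "taylor3 n F (1, 0, 0) 0 b c = F a b c" using s by (simp add: taylor3_P1)
    with m lt F show False by (simp add: mult3_ge_def)
  qed
next
  assume H: "\<forall>a b c. F a b c \<noteq> 0 \<longrightarrow> M \<le> b + c"
  show "mult3_ge n F (1, 0, 0) M"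
    unfolding mult3_ge_def
  proof (intro allI impI)
    fix i j k assume "i + j + k < M"
    hence "\<And>a. F a j k = 0" using H by force
    thus "taylor3 n F (1, 0, 0) i j k = 0" by (simp add: taylor3_P1 tay1_zero)
  qed
qed

lemma P2_char:
  assumes h: "homog_poly n F"
  shows "mult3_ge n F (0, 1, 0) M \<longleftrightarrow> (\<forall>a b c. F a b c \<noteq> 0 \<longrightarrow> M \<le> a + c)"
proof
  assume m: "mult3_ge n F (0, 1, 0) M"
  show "\<forall>a b c. F a b c \<noteq> 0 \<longrightarrow> M \<le> a + c"
  proof (intro allI impI, rule ccontr)
    fix a b c assume F: "F a b c \<noteq> 0" and "\<not> M \<le> a + c"
    hence lt: "a + 0 + c < M" by simp
    have s: "a + b + c = n" using homogD[OF h F] .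
    have "tay1 n (\<lambda>b'. F a b' c) 1 0 = (\<Sum>b'\<in>{0..n}. F a b' c)" by (simp add: tay1_def)
    also have "\<dots> = F a b c"
      by (rule sum_single) (use s homog_uniq[OF h F] in \<open>auto\<close>)
    finally have "taylor3 n F (0, 1, 0) a 0 c = F a b c" using s by (simp add: taylor3_P2)
    with m lt F show False by (simp add: mult3_ge_def)
  qed
next
  assume H: "\<forall>a b c. F a b c \<noteq> 0 \<longrightarrow> M \<le> a + c"
  show "mult3_ge n F (0, 1, 0) M"
    unfolding mult3_ge_def
  proof (intro allI impI)
    fix i j k assume "i + j + k < M"
    hence "\<And>b. F i b k = 0" using H by force
    thus "taylor3 n F (0, 1, 0) i j k = 0" by (simp add: taylor3_P2 tay1_zero)
  qed
qed

definition Tc :: "complex \<Rightarrow> (nat \<Rightarrow> nat \<Rightarrow> complex) \<Rightarrow> nat \<Rightarrow> nat \<Rightarrow> complex" where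
  "Tc t h i j = tay1 i (h i) t j"

definition mT :: "complex \<Rightarrow> (nat \<Rightarrow> nat \<Rightarrow> complex) \<Rightarrow> nat \<Rightarrow> bool" where
  "mT t h M \<longleftrightarrow> (\<forall>i j. i + j < M \<longrightarrow> Tc t h i j = 0)"

definition lows :: "(nat \<Rightarrow> nat \<Rightarrow> complex) \<Rightarrow> bool" where
  "lows h \<longleftrightarrow> (\<forall>i b. i < b \<longrightarrow> h i b = 0)"

lemma mT_mono: "mT t h M \<Longrightarrow> M' \<le> M \<Longrightarrow> mT t h M'"
  by (auto simp: mT_def)

lemma mT_0: "mT t h 0"
  by (simp add: mT_def)

lemma Tc_S: "Tc t (\<lambda>i b. c i * h i b) i j = c i * Tc t h i j"
  by (simp add: Tc_def tay1_cmult)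

lemma Tc_P2: "Tc t (\<lambda>i b. of_nat (Suc b) * h (Suc i) (Suc b)) i j = of_nat (Suc j) * Tc t h (Suc i) (Suc j)"
  unfolding Tc_def by (rule tay1_d)

lemma Tc_P1:
  assumes l: "lows h"
  shows "Tc t (\<lambda>i b. of_nat (Suc i - b) * h (Suc i) b) i j =
     of_nat (Suc i) * Tc t h (Suc i) j - (of_nat j * Tc t h (Suc i) j + of_nat (Suc j) * t * Tc t h (Suc i) (Suc j))"
proof -
  have "Tc t (\<lambda>i b. of_nat (Suc i - b) * h (Suc i) b) i j = tay1 (Suc i) (\<lambda>b. of_nat (Suc i - b) * h (Suc i) b) t j"
    unfolding Tc_def
    by (rule tay1_bound[symmetric]) (use l in \<open>auto simp: lows_def\<close>)
  also have "\<dots> = tay1 (Suc i) (\<lambda>b. of_nat (Suc i) * h (Suc i) b - of_nat b * h (Suc i) b) t j"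
    by (rule tay1_cong) (simp add: of_nat_diff algebra_simps)
  also have "\<dots> = of_nat (Suc i) * Tc t h (Suc i) j - (of_nat j * Tc t h (Suc i) j + of_nat (Suc j) * t * Tc t h (Suc i) (Suc j))"
    unfolding tay1_diff tay1_cmult tay1_mulid Tc_def ..
  finally show ?thesis .
qed

lemma Tc_M:
  "Tc t (\<lambda>i b. if 1 \<le> i \<and> 1 \<le> b then h (i - 1) (b - 1) else 0) i j =
     (if i = 0 then 0 else t * Tc t h (i - 1) j + (if j = 0 then 0 else Tc t h (i - 1) (j - 1)))"
proof (cases i)
  case 0 thus ?thesis by (simp add: Tc_def)
next
  case (Suc i')
  have "Tc t (\<lambda>i b. if 1 \<le> i \<and> 1 \<le> b then h (i - 1) (b - 1) else 0) i j = tay1 (Suc i') (\<lambda>b. if b = 0 then 0 else h i' (b - 1)) t j"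
    unfolding Tc_def Suc by (rule tay1_cong) auto
  also have "\<dots> = t * tay1 i' (h i') t j + (if j = 0 then 0 else tay1 i' (h i') t (j - 1))"
    by (rule tay1_m)
  finally show ?thesis using Suc by (simp add: Tc_def)
qed

lemma Tc_M':
  assumes l: "lows h"
  shows "Tc t (\<lambda>i b. if b < i then h (i - 1) b else 0) i j = (if i = 0 then 0 else Tc t h (i - 1) j)"
proof (cases i)
  case 0 thus ?thesis by (simp add: Tc_def)
next
  case (Suc i')
  have "Tc t (\<lambda>i b. if b < i then h (i - 1) b else 0) i j = tay1 (Suc i') (h i') t j"
    unfolding Tc_def Suc by (rule tay1_cong) (use l in \<open>auto simp: lows_def\<close>)
  also have "\<dots> = tay1 i' (h i') t j"
    by (rule tay1_bound) (use l in \<open>auto simp: lows_def\<close>)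
  finally show ?thesis using Suc by (simp add: Tc_def)
qed

lemma Tc_lin: "Tc t (\<lambda>i b. \<alpha> * h1 i b + \<beta> * h2 i b) i j = \<alpha> * Tc t h1 i j + \<beta> * Tc t h2 i j"
  by (simp add: Tc_def tay1_add tay1_cmult)

lemma mT_S: "mT t h M \<Longrightarrow> mT t (\<lambda>i b. c i * h i b) M"
  by (simp add: mT_def Tc_S)

lemma mT_P2: "mT t h M \<Longrightarrow> mT t (\<lambda>i b. of_nat (Suc b) * h (Suc i) (Suc b)) (M - 2)"
  unfolding mT_def Tc_P2 by auto

lemma mT_P1: "lows h \<Longrightarrow> mT t h M \<Longrightarrow> mT t (\<lambda>i b. of_nat (Suc i - b) * h (Suc i) b) (M - 2)"
  unfolding mT_def by (simp add: Tc_P1)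

lemma mT_M: "mT t h M \<Longrightarrow> mT t (\<lambda>i b. if 1 \<le> i \<and> 1 \<le> b then h (i - 1) (b - 1) else 0) (Suc M)"
  unfolding mT_def Tc_M by auto

lemma mT_M': "lows h \<Longrightarrow> mT t h M \<Longrightarrow> mT t (\<lambda>i b. if b < i then h (i - 1) b else 0) (Suc M)"
  unfolding mT_def by (auto simp: Tc_M')

lemma mT_lin: "mT t h1 M \<Longrightarrow> mT t h2 M \<Longrightarrow> mT t (\<lambda>i b. \<alpha> * h1 i b + \<beta> * h2 i b) M"
  unfolding mT_def by (simp add: Tc_lin)

lemma taylor2_nf: "taylor2 N h (0, t) i j = tay1 N (\<lambda>a. tay1 N (h a) t j) 0 i"
  by (simp add: taylor2_def tay1_def sum_distrib_left sum_distrib_right mult_ac)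

lemma mult2_mT:
  assumes s: "\<And>i j. h i j \<noteq> 0 \<Longrightarrow> j \<le> i \<and> i \<le> N"
  shows "mult2_ge N h (0, t) M = mT t h M"
proof -
  have "taylor2 N h (0, t) i j = Tc t h i j" for i j
  proof (cases "i \<le> N")
    case True
    have "taylor2 N h (0, t) i j = tay1 N (h i) t j" using True by (simp add: taylor2_nf tay1_at0)
    also have "\<dots> = tay1 i (h i) t j"
      by (rule tay1_bound) (use s True in \<open>force+\<close>)
    finally show ?thesis by (simp add: Tc_def)
  next
    case False
    hence "h i b = 0" for b using s by force
    thus ?thesis using False by (simp add: taylor2_nf tay1_at0 Tc_def tay1_zero)
  qed
  thus ?thesis by (simp add: mult2_ge_def mT_def)
qed

definition c1a :: "nat \<Rightarrow> poly3 \<Rightarrow> nat \<Rightarrow> nat \<Rightarrow> complex" where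
  "c1a n F = (\<lambda>i j. if j \<le> i \<and> i \<le> n then F (n - i) (i - j) j else 0)"
definition c1b :: "nat \<Rightarrow> poly3 \<Rightarrow> nat \<Rightarrow> nat \<Rightarrow> complex" where
  "c1b n F = (\<lambda>i j. if j \<le> i \<and> i \<le> n then F (n - i) j (i - j) else 0)"
definition c2a :: "nat \<Rightarrow> poly3 \<Rightarrow> nat \<Rightarrow> nat \<Rightarrow> complex" where
  "c2a n F = (\<lambda>i j. if j \<le> i \<and> i \<le> n then F (i - j) (n - i) j else 0)"
definition c2b :: "nat \<Rightarrow> poly3 \<Rightarrow> nat \<Rightarrow> nat \<Rightarrow> complex" where
  "c2b n F = (\<lambda>i j. if j \<le> i \<and> i \<le> n then F j (n - i) (i - j) else 0)"

lemmas chart_defs = c1a_def c1b_def c2a_def c2b_def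

lemma lows_c: "lows (c1a n F)" "lows (c1b n F)" "lows (c2a n F)" "lows (c2b n F)"
  by (auto simp: lows_def chart_defs)

lemma supp_c:
  "c1a n F i j \<noteq> 0 \<Longrightarrow> j \<le> i \<and> i \<le> n" "c1b n F i j \<noteq> 0 \<Longrightarrow> j \<le> i \<and> i \<le> n"
  "c2a n F i j \<noteq> 0 \<Longrightarrow> j \<le> i \<and> i \<le> n" "c2b n F i j \<noteq> 0 \<Longrightarrow> j \<le> i \<and> i \<le> n"
  by (auto simp: chart_defs split: if_splits)

lemma c1a_dx: assumes n: "0 < n" shows "c1a (n - 1) (dx F) = (\<lambda>i b. of_nat (n - i) * c1a n F i b)"
proof (rule ext, rule ext)
  fix i b
  show "c1a (n - 1) (dx F) i b = (\<lambda>i b. of_nat (n - i) * c1a n F i b) i b"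
  proof (cases "b \<le> i \<and> i < n")
    case True
    hence e: "n - 1 - i = n - Suc i" "Suc (n - 1 - i) = n - i" "Suc (i - b) = Suc i - b" "n - i = Suc (n - Suc i)" "i \<le> n - Suc 0" using n by auto
    show ?thesis using True n by (simp add: c1a_def dx_def e)
  next
    case False
    thus ?thesis using n by (auto simp: c1a_def dx_def not_le)
  qed
qed
lemma c1a_dy: assumes n: "0 < n" shows "c1a (n - 1) (dy F) = (\<lambda>i b. of_nat (Suc i - b) * c1a n F (Suc i) b)"
proof (rule ext, rule ext)
  fix i b
  show "c1a (n - 1) (dy F) i b = (\<lambda>i b. of_nat (Suc i - b) * c1a n F (Suc i) b) i b"
  proof (cases "b \<le> i \<and> i < n")
    case True
    hence e: "n - 1 - i = n - Suc i" "Suc (n - 1 - i) = n - i" "Suc (i - b) = Suc i - b" "n - i = Suc (n - Suc i)" "i \<le> n - Suc 0" using n by auto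
    show ?thesis using True n by (simp add: c1a_def dy_def e)
  next
    case False
    thus ?thesis using n by (auto simp: c1a_def dy_def not_le)
  qed
qed
lemma c1a_dz: assumes n: "0 < n" shows "c1a (n - 1) (dz F) = (\<lambda>i b. of_nat (Suc b) * c1a n F (Suc i) (Suc b))"
proof (rule ext, rule ext)
  fix i b
  show "c1a (n - 1) (dz F) i b = (\<lambda>i b. of_nat (Suc b) * c1a n F (Suc i) (Suc b)) i b"
  proof (cases "b \<le> i \<and> i < n")
    case True
    hence e: "n - 1 - i = n - Suc i" "Suc (n - 1 - i) = n - i" "Suc (i - b) = Suc i - b" "n - i = Suc (n - Suc i)" "i \<le> n - Suc 0" using n by auto
    show ?thesis using True n by (simp add: c1a_def dz_def e)
  next
    case False
    thus ?thesis using n by (auto simp: c1a_def dz_def not_le)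
  qed
qed
lemma c1a_mx: "c1a (Suc n) (mx F) = c1a n F"
proof (rule ext, rule ext)
  fix i b
  show "c1a (Suc n) (mx F) i b = c1a n F i b"
    by (cases "b \<le> i \<and> i \<le> Suc n"; cases "i = b"; cases "b = 0"; cases "i = 0") (auto simp: c1a_def mx_def Suc_diff_le)
qed
lemma c1a_my: "c1a (Suc n) (my F) = (\<lambda>i b. if b < i then c1a n F (i - 1) b else 0)"
proof (rule ext, rule ext)
  fix i b
  show "c1a (Suc n) (my F) i b = (\<lambda>i b. if b < i then c1a n F (i - 1) b else 0) i b"
    by (cases "b \<le> i \<and> i \<le> Suc n"; cases "i = b"; cases "b = 0"; cases "i = 0") (auto simp: c1a_def my_def Suc_diff_le)
qed
lemma c1a_mz: "c1a (Suc n) (mz F) = (\<lambda>i b. if 1 \<le> i \<and> 1 \<le> b then c1a n F (i - 1) (b - 1) else 0)"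
proof (rule ext, rule ext)
  fix i b
  show "c1a (Suc n) (mz F) i b = (\<lambda>i b. if 1 \<le> i \<and> 1 \<le> b then c1a n F (i - 1) (b - 1) else 0) i b"
    by (cases "b \<le> i \<and> i \<le> Suc n"; cases "i = b"; cases "b = 0"; cases "i = 0") (auto simp: c1a_def mz_def Suc_diff_le)
qed
lemma c1b_dx: assumes n: "0 < n" shows "c1b (n - 1) (dx F) = (\<lambda>i b. of_nat (n - i) * c1b n F i b)"
proof (rule ext, rule ext)
  fix i b
  show "c1b (n - 1) (dx F) i b = (\<lambda>i b. of_nat (n - i) * c1b n F i b) i b"
  proof (cases "b \<le> i \<and> i < n")
    case True
    hence e: "n - 1 - i = n - Suc i" "Suc (n - 1 - i) = n - i" "Suc (i - b) = Suc i - b" "n - i = Suc (n - Suc i)" "i \<le> n - Suc 0" using n by auto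
    show ?thesis using True n by (simp add: c1b_def dx_def e)
  next
    case False
    thus ?thesis using n by (auto simp: c1b_def dx_def not_le)
  qed
qed
lemma c1b_dy: assumes n: "0 < n" shows "c1b (n - 1) (dy F) = (\<lambda>i b. of_nat (Suc b) * c1b n F (Suc i) (Suc b))"
proof (rule ext, rule ext)
  fix i b
  show "c1b (n - 1) (dy F) i b = (\<lambda>i b. of_nat (Suc b) * c1b n F (Suc i) (Suc b)) i b"
  proof (cases "b \<le> i \<and> i < n")
    case True
    hence e: "n - 1 - i = n - Suc i" "Suc (n - 1 - i) = n - i" "Suc (i - b) = Suc i - b" "n - i = Suc (n - Suc i)" "i \<le> n - Suc 0" using n by auto
    show ?thesis using True n by (simp add: c1b_def dy_def e)
  next
    case False
    thus ?thesis using n by (auto simp: c1b_def dy_def not_le)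
  qed
qed
lemma c1b_dz: assumes n: "0 < n" shows "c1b (n - 1) (dz F) = (\<lambda>i b. of_nat (Suc i - b) * c1b n F (Suc i) b)"
proof (rule ext, rule ext)
  fix i b
  show "c1b (n - 1) (dz F) i b = (\<lambda>i b. of_nat (Suc i - b) * c1b n F (Suc i) b) i b"
  proof (cases "b \<le> i \<and> i < n")
    case True
    hence e: "n - 1 - i = n - Suc i" "Suc (n - 1 - i) = n - i" "Suc (i - b) = Suc i - b" "n - i = Suc (n - Suc i)" "i \<le> n - Suc 0" using n by auto
    show ?thesis using True n by (simp add: c1b_def dz_def e)
  next
    case False
    thus ?thesis using n by (auto simp: c1b_def dz_def not_le)
  qed
qed
lemma c1b_mx: "c1b (Suc n) (mx F) = c1b n F"
proof (rule ext, rule ext)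
  fix i b
  show "c1b (Suc n) (mx F) i b = c1b n F i b"
    by (cases "b \<le> i \<and> i \<le> Suc n"; cases "i = b"; cases "b = 0"; cases "i = 0") (auto simp: c1b_def mx_def Suc_diff_le)
qed
lemma c1b_my: "c1b (Suc n) (my F) = (\<lambda>i b. if 1 \<le> i \<and> 1 \<le> b then c1b n F (i - 1) (b - 1) else 0)"
proof (rule ext, rule ext)
  fix i b
  show "c1b (Suc n) (my F) i b = (\<lambda>i b. if 1 \<le> i \<and> 1 \<le> b then c1b n F (i - 1) (b - 1) else 0) i b"
    by (cases "b \<le> i \<and> i \<le> Suc n"; cases "i = b"; cases "b = 0"; cases "i = 0") (auto simp: c1b_def my_def Suc_diff_le)
qed
lemma c1b_mz: "c1b (Suc n) (mz F) = (\<lambda>i b. if b < i then c1b n F (i - 1) b else 0)"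
proof (rule ext, rule ext)
  fix i b
  show "c1b (Suc n) (mz F) i b = (\<lambda>i b. if b < i then c1b n F (i - 1) b else 0) i b"
    by (cases "b \<le> i \<and> i \<le> Suc n"; cases "i = b"; cases "b = 0"; cases "i = 0") (auto simp: c1b_def mz_def Suc_diff_le)
qed
lemma c2a_dx: assumes n: "0 < n" shows "c2a (n - 1) (dx F) = (\<lambda>i b. of_nat (Suc i - b) * c2a n F (Suc i) b)"
proof (rule ext, rule ext)
  fix i b
  show "c2a (n - 1) (dx F) i b = (\<lambda>i b. of_nat (Suc i - b) * c2a n F (Suc i) b) i b"
  proof (cases "b \<le> i \<and> i < n")
    case True
    hence e: "n - 1 - i = n - Suc i" "Suc (n - 1 - i) = n - i" "Suc (i - b) = Suc i - b" "n - i = Suc (n - Suc i)" "i \<le> n - Suc 0" using n by auto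
    show ?thesis using True n by (simp add: c2a_def dx_def e)
  next
    case False
    thus ?thesis using n by (auto simp: c2a_def dx_def not_le)
  qed
qed
lemma c2a_dy: assumes n: "0 < n" shows "c2a (n - 1) (dy F) = (\<lambda>i b. of_nat (n - i) * c2a n F i b)"
proof (rule ext, rule ext)
  fix i b
  show "c2a (n - 1) (dy F) i b = (\<lambda>i b. of_nat (n - i) * c2a n F i b) i b"
  proof (cases "b \<le> i \<and> i < n")
    case True
    hence e: "n - 1 - i = n - Suc i" "Suc (n - 1 - i) = n - i" "Suc (i - b) = Suc i - b" "n - i = Suc (n - Suc i)" "i \<le> n - Suc 0" using n by auto
    show ?thesis using True n by (simp add: c2a_def dy_def e)
  next
    case False
    thus ?thesis using n by (auto simp: c2a_def dy_def not_le)
  qed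
qed
lemma c2a_dz: assumes n: "0 < n" shows "c2a (n - 1) (dz F) = (\<lambda>i b. of_nat (Suc b) * c2a n F (Suc i) (Suc b))"
proof (rule ext, rule ext)
  fix i b
  show "c2a (n - 1) (dz F) i b = (\<lambda>i b. of_nat (Suc b) * c2a n F (Suc i) (Suc b)) i b"
  proof (cases "b \<le> i \<and> i < n")
    case True
    hence e: "n - 1 - i = n - Suc i" "Suc (n - 1 - i) = n - i" "Suc (i - b) = Suc i - b" "n - i = Suc (n - Suc i)" "i \<le> n - Suc 0" using n by auto
    show ?thesis using True n by (simp add: c2a_def dz_def e)
  next
    case False
    thus ?thesis using n by (auto simp: c2a_def dz_def not_le)
  qed
qed
lemma c2a_mx: "c2a (Suc n) (mx F) = (\<lambda>i b. if b < i then c2a n F (i - 1) b else 0)"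
proof (rule ext, rule ext)
  fix i b
  show "c2a (Suc n) (mx F) i b = (\<lambda>i b. if b < i then c2a n F (i - 1) b else 0) i b"
    by (cases "b \<le> i \<and> i \<le> Suc n"; cases "i = b"; cases "b = 0"; cases "i = 0") (auto simp: c2a_def mx_def Suc_diff_le)
qed
lemma c2a_my: "c2a (Suc n) (my F) = c2a n F"
proof (rule ext, rule ext)
  fix i b
  show "c2a (Suc n) (my F) i b = c2a n F i b"
    by (cases "b \<le> i \<and> i \<le> Suc n"; cases "i = b"; cases "b = 0"; cases "i = 0") (auto simp: c2a_def my_def Suc_diff_le)
qed
lemma c2a_mz: "c2a (Suc n) (mz F) = (\<lambda>i b. if 1 \<le> i \<and> 1 \<le> b then c2a n F (i - 1) (b - 1) else 0)"
proof (rule ext, rule ext)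
  fix i b
  show "c2a (Suc n) (mz F) i b = (\<lambda>i b. if 1 \<le> i \<and> 1 \<le> b then c2a n F (i - 1) (b - 1) else 0) i b"
    by (cases "b \<le> i \<and> i \<le> Suc n"; cases "i = b"; cases "b = 0"; cases "i = 0") (auto simp: c2a_def mz_def Suc_diff_le)
qed
lemma c2b_dx: assumes n: "0 < n" shows "c2b (n - 1) (dx F) = (\<lambda>i b. of_nat (Suc b) * c2b n F (Suc i) (Suc b))"
proof (rule ext, rule ext)
  fix i b
  show "c2b (n - 1) (dx F) i b = (\<lambda>i b. of_nat (Suc b) * c2b n F (Suc i) (Suc b)) i b"
  proof (cases "b \<le> i \<and> i < n")
    case True
    hence e: "n - 1 - i = n - Suc i" "Suc (n - 1 - i) = n - i" "Suc (i - b) = Suc i - b" "n - i = Suc (n - Suc i)" "i \<le> n - Suc 0" using n by auto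
    show ?thesis using True n by (simp add: c2b_def dx_def e)
  next
    case False
    thus ?thesis using n by (auto simp: c2b_def dx_def not_le)
  qed
qed
lemma c2b_dy: assumes n: "0 < n" shows "c2b (n - 1) (dy F) = (\<lambda>i b. of_nat (n - i) * c2b n F i b)"
proof (rule ext, rule ext)
  fix i b
  show "c2b (n - 1) (dy F) i b = (\<lambda>i b. of_nat (n - i) * c2b n F i b) i b"
  proof (cases "b \<le> i \<and> i < n")
    case True
    hence e: "n - 1 - i = n - Suc i" "Suc (n - 1 - i) = n - i" "Suc (i - b) = Suc i - b" "n - i = Suc (n - Suc i)" "i \<le> n - Suc 0" using n by auto
    show ?thesis using True n by (simp add: c2b_def dy_def e)
  next
    case False
    thus ?thesis using n by (auto simp: c2b_def dy_def not_le)
  qed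
qed
lemma c2b_dz: assumes n: "0 < n" shows "c2b (n - 1) (dz F) = (\<lambda>i b. of_nat (Suc i - b) * c2b n F (Suc i) b)"
proof (rule ext, rule ext)
  fix i b
  show "c2b (n - 1) (dz F) i b = (\<lambda>i b. of_nat (Suc i - b) * c2b n F (Suc i) b) i b"
  proof (cases "b \<le> i \<and> i < n")
    case True
    hence e: "n - 1 - i = n - Suc i" "Suc (n - 1 - i) = n - i" "Suc (i - b) = Suc i - b" "n - i = Suc (n - Suc i)" "i \<le> n - Suc 0" using n by auto
    show ?thesis using True n by (simp add: c2b_def dz_def e)
  next
    case False
    thus ?thesis using n by (auto simp: c2b_def dz_def not_le)
  qed
qed
lemma c2b_mx: "c2b (Suc n) (mx F) = (\<lambda>i b. if 1 \<le> i \<and> 1 \<le> b then c2b n F (i - 1) (b - 1) else 0)"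
proof (rule ext, rule ext)
  fix i b
  show "c2b (Suc n) (mx F) i b = (\<lambda>i b. if 1 \<le> i \<and> 1 \<le> b then c2b n F (i - 1) (b - 1) else 0) i b"
    by (cases "b \<le> i \<and> i \<le> Suc n"; cases "i = b"; cases "b = 0"; cases "i = 0") (auto simp: c2b_def mx_def Suc_diff_le)
qed
lemma c2b_my: "c2b (Suc n) (my F) = c2b n F"
proof (rule ext, rule ext)
  fix i b
  show "c2b (Suc n) (my F) i b = c2b n F i b"
    by (cases "b \<le> i \<and> i \<le> Suc n"; cases "i = b"; cases "b = 0"; cases "i = 0") (auto simp: c2b_def my_def Suc_diff_le)
qed
lemma c2b_mz: "c2b (Suc n) (mz F) = (\<lambda>i b. if b < i then c2b n F (i - 1) b else 0)"
proof (rule ext, rule ext)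
  fix i b
  show "c2b (Suc n) (mz F) i b = (\<lambda>i b. if b < i then c2b n F (i - 1) b else 0) i b"
    by (cases "b \<le> i \<and> i \<le> Suc n"; cases "i = b"; cases "b = 0"; cases "i = 0") (auto simp: c2b_def mz_def Suc_diff_le)
qed

lemma c_lin:
  "c1a n (lin \<alpha> \<beta> F) = (\<lambda>i b. \<alpha> * c1a n (mx F) i b + \<beta> * c1a n (mz F) i b)"
  "c1b n (lin \<alpha> \<beta> F) = (\<lambda>i b. \<alpha> * c1b n (mx F) i b + \<beta> * c1b n (mz F) i b)"
  "c2a n (lin \<alpha> \<beta> F) = (\<lambda>i b. \<alpha> * c2a n (mx F) i b + \<beta> * c2a n (mz F) i b)"
  "c2b n (lin \<alpha> \<beta> F) = (\<lambda>i b. \<alpha> * c2b n (mx F) i b + \<beta> * c2b n (mz F) i b)"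
  by (auto simp: fun_eq_iff chart_defs lin_def)

fun pm :: "nat \<Rightarrow> poly3 \<Rightarrow> S2pt \<Rightarrow> nat \<Rightarrow> bool" where
  "pm n F (Off p) M = mult3_ge n F p M"
| "pm n F (OnE1 (a, b)) M = (if a \<noteq> 0 then mT (b / a) (c1a n F) M else mT 0 (c1b n F) M)"
| "pm n F (OnE2 (a, b)) M = (if a \<noteq> 0 then mT (b / a) (c2a n F) M else mT 0 (c2b n F) M)"

fun ddx :: "S2pt \<Rightarrow> nat" where
  "ddx (Off p) = 1" | "ddx (OnE1 ab) = 0" | "ddx (OnE2 ab) = 2"
fun ddy :: "S2pt \<Rightarrow> nat" where
  "ddy (Off p) = 1" | "ddy (OnE1 ab) = 2" | "ddy (OnE2 ab) = 0"
fun ddz :: "S2pt \<Rightarrow> nat" where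
  "ddz (Off p) = 1" | "ddz (OnE1 ab) = 2" | "ddz (OnE2 ab) = 2"

fun gx :: "S2pt \<Rightarrow> nat" where
  "gx (Off p) = (if fst p = 0 then 1 else 0)" | "gx (OnE1 ab) = 0" | "gx (OnE2 ab) = 1"
fun gy :: "S2pt \<Rightarrow> nat" where
  "gy (Off p) = (if fst (snd p) = 0 then 1 else 0)" | "gy (OnE1 ab) = 1" | "gy (OnE2 ab) = 0"
fun gz :: "S2pt \<Rightarrow> nat" where
  "gz (Off p) = 0" | "gz (OnE1 ab) = 1" | "gz (OnE2 ab) = 1"
fun gl :: "complex \<Rightarrow> complex \<Rightarrow> S2pt \<Rightarrow> nat" where
  "gl \<alpha> \<beta> (Off p) = (if \<alpha> * fst p + \<beta> * snd (snd p) = 0 then 1 else 0)" | "gl \<alpha> \<beta> (OnE1 ab) = 0" | "gl \<alpha> \<beta> (OnE2 ab) = 0"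

fun wt :: "nat \<Rightarrow> S2pt \<Rightarrow> nat" where
  "wt d (Off p) = 0" | "wt d (OnE1 ab) = d" | "wt d (OnE2 ab) = d"

lemma pt_cases[case_names Off E1 E2]:
  obtains (Off) p where "q = Off p" | (E1) a b where "q = OnE1 (a, b)" | (E2) a b where "q = OnE2 (a, b)"
  by (cases q) auto

lemma pm_mono: "pm n F q M \<Longrightarrow> M' \<le> M \<Longrightarrow> pm n F q M'"
  by (cases q rule: pt_cases) (auto intro: mult3_mono mT_mono)

lemma pm_0: "pm n F q 0"
  by (cases q rule: pt_cases) (auto simp: mult3_ge_def mT_0)

lemma pmE1I: "(a \<noteq> 0 \<Longrightarrow> mT (b / a) (c1a n F) M) \<Longrightarrow> (a = 0 \<Longrightarrow> mT 0 (c1b n F) M) \<Longrightarrow> pm n F (OnE1 (a, b)) M"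
  by simp
lemma pmE2I: "(a \<noteq> 0 \<Longrightarrow> mT (b / a) (c2a n F) M) \<Longrightarrow> (a = 0 \<Longrightarrow> mT 0 (c2b n F) M) \<Longrightarrow> pm n F (OnE2 (a, b)) M"
  by simp

lemma pm_dx:
  assumes h: "homog_poly n F" and n: "0 < n" and m: "pm n F q M"
  shows "pm (n - 1) (dx F) q (M - ddx q)"
  using m
proof (cases q rule: pt_cases)
  case (Off p) thus ?thesis using m M3_dx[OF h] by simp
next
  case (E1 a b)
  have "pm n F (OnE1 (a, b)) M" using m E1 by simp
  hence A: "a \<noteq> 0 \<Longrightarrow> mT (b / a) (c1a n F) M" and B: "a = 0 \<Longrightarrow> mT 0 (c1b n F) M" by auto
  have "pm (n - 1) (dx F) (OnE1 (a, b)) M"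
  proof (rule pmE1I)
    assume a: "a \<noteq> 0"
    show "mT (b / a) (c1a (n - 1) (dx F)) M" unfolding c1a_dx[OF n] by (rule mT_S[OF A[OF a]])
  next
    assume a: "a = 0"
    show "mT 0 (c1b (n - 1) (dx F)) M" unfolding c1b_dx[OF n] by (rule mT_S[OF B[OF a]])
  qed
  thus ?thesis using E1 by simp
next
  case (E2 a b)
  have "pm n F (OnE2 (a, b)) M" using m E2 by simp
  hence A: "a \<noteq> 0 \<Longrightarrow> mT (b / a) (c2a n F) M" and B: "a = 0 \<Longrightarrow> mT 0 (c2b n F) M" by auto
  have "pm (n - 1) (dx F) (OnE2 (a, b)) (M - 2)"
  proof (rule pmE2I)
    assume a: "a \<noteq> 0"
    show "mT (b / a) (c2a (n - 1) (dx F)) (M - 2)" unfolding c2a_dx[OF n] by (rule mT_P1[OF lows_c(3) A[OF a]])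
  next
    assume a: "a = 0"
    show "mT 0 (c2b (n - 1) (dx F)) (M - 2)" unfolding c2b_dx[OF n] by (rule mT_P2[OF B[OF a]])
  qed
  thus ?thesis using E2 by simp
qed

lemma pm_dy:
  assumes h: "homog_poly n F" and n: "0 < n" and m: "pm n F q M"
  shows "pm (n - 1) (dy F) q (M - ddy q)"
  using m
proof (cases q rule: pt_cases)
  case (Off p) thus ?thesis using m M3_dy[OF h] by simp
next
  case (E1 a b)
  have "pm n F (OnE1 (a, b)) M" using m E1 by simp
  hence A: "a \<noteq> 0 \<Longrightarrow> mT (b / a) (c1a n F) M" and B: "a = 0 \<Longrightarrow> mT 0 (c1b n F) M" by auto
  have "pm (n - 1) (dy F) (OnE1 (a, b)) (M - 2)"
  proof (rule pmE1I)
    assume a: "a \<noteq> 0"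
    show "mT (b / a) (c1a (n - 1) (dy F)) (M - 2)" unfolding c1a_dy[OF n] by (rule mT_P1[OF lows_c(1) A[OF a]])
  next
    assume a: "a = 0"
    show "mT 0 (c1b (n - 1) (dy F)) (M - 2)" unfolding c1b_dy[OF n] by (rule mT_P2[OF B[OF a]])
  qed
  thus ?thesis using E1 by simp
next
  case (E2 a b)
  have "pm n F (OnE2 (a, b)) M" using m E2 by simp
  hence A: "a \<noteq> 0 \<Longrightarrow> mT (b / a) (c2a n F) M" and B: "a = 0 \<Longrightarrow> mT 0 (c2b n F) M" by auto
  have "pm (n - 1) (dy F) (OnE2 (a, b)) M"
  proof (rule pmE2I)
    assume a: "a \<noteq> 0"
    show "mT (b / a) (c2a (n - 1) (dy F)) M" unfolding c2a_dy[OF n] by (rule mT_S[OF A[OF a]])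
  next
    assume a: "a = 0"
    show "mT 0 (c2b (n - 1) (dy F)) M" unfolding c2b_dy[OF n] by (rule mT_S[OF B[OF a]])
  qed
  thus ?thesis using E2 by simp
qed

lemma pm_dz:
  assumes h: "homog_poly n F" and n: "0 < n" and m: "pm n F q M"
  shows "pm (n - 1) (dz F) q (M - ddz q)"
  using m
proof (cases q rule: pt_cases)
  case (Off p) thus ?thesis using m M3_dz[OF h] by simp
next
  case (E1 a b)
  have "pm n F (OnE1 (a, b)) M" using m E1 by simp
  hence A: "a \<noteq> 0 \<Longrightarrow> mT (b / a) (c1a n F) M" and B: "a = 0 \<Longrightarrow> mT 0 (c1b n F) M" by auto
  have "pm (n - 1) (dz F) (OnE1 (a, b)) (M - 2)"
  proof (rule pmE1I)
    assume a: "a \<noteq> 0"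
    show "mT (b / a) (c1a (n - 1) (dz F)) (M - 2)" unfolding c1a_dz[OF n] by (rule mT_P2[OF A[OF a]])
  next
    assume a: "a = 0"
    show "mT 0 (c1b (n - 1) (dz F)) (M - 2)" unfolding c1b_dz[OF n] by (rule mT_P1[OF lows_c(2) B[OF a]])
  qed
  thus ?thesis using E1 by simp
next
  case (E2 a b)
  have "pm n F (OnE2 (a, b)) M" using m E2 by simp
  hence A: "a \<noteq> 0 \<Longrightarrow> mT (b / a) (c2a n F) M" and B: "a = 0 \<Longrightarrow> mT 0 (c2b n F) M" by auto
  have "pm (n - 1) (dz F) (OnE2 (a, b)) (M - 2)"
  proof (rule pmE2I)
    assume a: "a \<noteq> 0"
    show "mT (b / a) (c2a (n - 1) (dz F)) (M - 2)" unfolding c2a_dz[OF n] by (rule mT_P2[OF A[OF a]])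
  next
    assume a: "a = 0"
    show "mT 0 (c2b (n - 1) (dz F)) (M - 2)" unfolding c2b_dz[OF n] by (rule mT_P1[OF lows_c(4) B[OF a]])
  qed
  thus ?thesis using E2 by simp
qed

lemma pm_mx:
  assumes h: "homog_poly n F" and m: "pm n F q M"
  shows "pm (Suc n) (mx F) q (M + gx q)"
  using m
proof (cases q rule: pt_cases)
  case (Off p)
  have "mult3_ge n F p M" using m Off by simp
  from M3_mx[OF h this] show ?thesis using Off by (cases "fst p = 0") auto
next
  case (E1 a b)
  have "pm n F (OnE1 (a, b)) M" using m E1 by simp
  hence A: "a \<noteq> 0 \<Longrightarrow> mT (b / a) (c1a n F) M" and B: "a = 0 \<Longrightarrow> mT 0 (c1b n F) M" by auto
  have "pm (Suc n) (mx F) (OnE1 (a, b)) M"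
  proof (rule pmE1I)
    assume a: "a \<noteq> 0"
    show "mT (b / a) (c1a (Suc n) (mx F)) M" unfolding c1a_mx by (rule A[OF a])
  next
    assume a: "a = 0"
    show "mT 0 (c1b (Suc n) (mx F)) M" unfolding c1b_mx by (rule B[OF a])
  qed
  thus ?thesis using E1 by simp
next
  case (E2 a b)
  have "pm n F (OnE2 (a, b)) M" using m E2 by simp
  hence A: "a \<noteq> 0 \<Longrightarrow> mT (b / a) (c2a n F) M" and B: "a = 0 \<Longrightarrow> mT 0 (c2b n F) M" by auto
  have "pm (Suc n) (mx F) (OnE2 (a, b)) (Suc M)"
  proof (rule pmE2I)
    assume a: "a \<noteq> 0"
    show "mT (b / a) (c2a (Suc n) (mx F)) (Suc M)" unfolding c2a_mx by (rule mT_M'[OF lows_c(3) A[OF a]])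
  next
    assume a: "a = 0"
    show "mT 0 (c2b (Suc n) (mx F)) (Suc M)" unfolding c2b_mx by (rule mT_M[OF B[OF a]])
  qed
  thus ?thesis using E2 by simp
qed

lemma pm_my:
  assumes h: "homog_poly n F" and m: "pm n F q M"
  shows "pm (Suc n) (my F) q (M + gy q)"
  using m
proof (cases q rule: pt_cases)
  case (Off p)
  have "mult3_ge n F p M" using m Off by simp
  from M3_my[OF h this] show ?thesis using Off by (cases "fst (snd p) = 0") auto
next
  case (E1 a b)
  have "pm n F (OnE1 (a, b)) M" using m E1 by simp
  hence A: "a \<noteq> 0 \<Longrightarrow> mT (b / a) (c1a n F) M" and B: "a = 0 \<Longrightarrow> mT 0 (c1b n F) M" by auto
  have "pm (Suc n) (my F) (OnE1 (a, b)) (Suc M)"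
  proof (rule pmE1I)
    assume a: "a \<noteq> 0"
    show "mT (b / a) (c1a (Suc n) (my F)) (Suc M)" unfolding c1a_my by (rule mT_M'[OF lows_c(1) A[OF a]])
  next
    assume a: "a = 0"
    show "mT 0 (c1b (Suc n) (my F)) (Suc M)" unfolding c1b_my by (rule mT_M[OF B[OF a]])
  qed
  thus ?thesis using E1 by simp
next
  case (E2 a b)
  have "pm n F (OnE2 (a, b)) M" using m E2 by simp
  hence A: "a \<noteq> 0 \<Longrightarrow> mT (b / a) (c2a n F) M" and B: "a = 0 \<Longrightarrow> mT 0 (c2b n F) M" by auto
  have "pm (Suc n) (my F) (OnE2 (a, b)) M"
  proof (rule pmE2I)
    assume a: "a \<noteq> 0"
    show "mT (b / a) (c2a (Suc n) (my F)) M" unfolding c2a_my by (rule A[OF a])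
  next
    assume a: "a = 0"
    show "mT 0 (c2b (Suc n) (my F)) M" unfolding c2b_my by (rule B[OF a])
  qed
  thus ?thesis using E2 by simp
qed

lemma lin01: "lin 0 1 F = mz F"
  by (simp add: lin_def fun_eq_iff)

lemma pm_mz:
  assumes h: "homog_poly n F" and m: "pm n F q M"
  shows "pm (Suc n) (mz F) q (M + gz q)"
  using m
proof (cases q rule: pt_cases)
  case (Off p)
  have "mult3_ge n F p M" using m Off by simp
  from M3_lin[OF h this, of 0 1] have X: "mult3_ge (Suc n) (lin 0 1 F) p (if 0 * fst p + 1 * snd (snd p) = 0 then Suc M else M)" .
  from X have "mult3_ge (Suc n) (mz F) p M" unfolding lin01 by (rule mult3_mono) simp
  thus ?thesis using Off by simp
next
  case (E1 a b)
  have "pm n F (OnE1 (a, b)) M" using m E1 by simp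
  hence A: "a \<noteq> 0 \<Longrightarrow> mT (b / a) (c1a n F) M" and B: "a = 0 \<Longrightarrow> mT 0 (c1b n F) M" by auto
  have "pm (Suc n) (mz F) (OnE1 (a, b)) (Suc M)"
  proof (rule pmE1I)
    assume a: "a \<noteq> 0"
    show "mT (b / a) (c1a (Suc n) (mz F)) (Suc M)" unfolding c1a_mz by (rule mT_M[OF A[OF a]])
  next
    assume a: "a = 0"
    show "mT 0 (c1b (Suc n) (mz F)) (Suc M)" unfolding c1b_mz by (rule mT_M'[OF lows_c(2) B[OF a]])
  qed
  thus ?thesis using E1 by simp
next
  case (E2 a b)
  have "pm n F (OnE2 (a, b)) M" using m E2 by simp
  hence A: "a \<noteq> 0 \<Longrightarrow> mT (b / a) (c2a n F) M" and B: "a = 0 \<Longrightarrow> mT 0 (c2b n F) M" by auto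
  have "pm (Suc n) (mz F) (OnE2 (a, b)) (Suc M)"
  proof (rule pmE2I)
    assume a: "a \<noteq> 0"
    show "mT (b / a) (c2a (Suc n) (mz F)) (Suc M)" unfolding c2a_mz by (rule mT_M[OF A[OF a]])
  next
    assume a: "a = 0"
    show "mT 0 (c2b (Suc n) (mz F)) (Suc M)" unfolding c2b_mz by (rule mT_M'[OF lows_c(4) B[OF a]])
  qed
  thus ?thesis using E2 by simp
qed

lemma pm_lin:
  assumes h: "homog_poly n F" and m: "pm n F q M"
  shows "pm (Suc n) (lin \<alpha> \<beta> F) q (M + gl \<alpha> \<beta> q)"
proof -
  have mx': "pm (Suc n) (mx F) q M" by (rule pm_mono[OF pm_mx[OF h m]]) simp
  have mz': "pm (Suc n) (mz F) q M" by (rule pm_mono[OF pm_mz[OF h m]]) simp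
  show ?thesis
  proof (cases q rule: pt_cases)
    case (Off p)
    have "mult3_ge n F p M" using m Off by simp
    from M3_lin[OF h this, of \<alpha> \<beta>] show ?thesis using Off by (cases "\<alpha> * fst p + \<beta> * snd (snd p) = 0") auto
  next
    case (E1 a b) thus ?thesis using mx' mz' by (auto simp: c_lin intro: mT_lin)
  next
    case (E2 a b) thus ?thesis using mx' mz' by (auto simp: c_lin intro: mT_lin)
  qed
qed

lemma mult_ge_pm: "mult_ge d F q m = pm (3 * d) F q (m + wt d q)"
proof (cases q rule: pt_cases)
  case (Off p) thus ?thesis by simp
next
  case (E1 a b)
  have e1: "(\<lambda>i j. if j \<le> i \<and> i \<le> 3 * d then F (3 * d - i) (i - j) j else 0) = c1a (3 * d) F"
    by (simp add: c1a_def)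
  have e2: "(\<lambda>i j. if j \<le> i \<and> i \<le> 3 * d then F (3 * d - i) j (i - j) else 0) = c1b (3 * d) F"
    by (simp add: c1b_def)
  show ?thesis using E1 by (simp only: mult_ge.simps pm.simps wt.simps e1 e2 mult2_mT[OF supp_c(1)] mult2_mT[OF supp_c(2)])
next
  case (E2 a b)
  have e1: "(\<lambda>i j. if j \<le> i \<and> i \<le> 3 * d then F (i - j) (3 * d - i) j else 0) = c2a (3 * d) F"
    by (simp add: c2a_def)
  have e2: "(\<lambda>i j. if j \<le> i \<and> i \<le> 3 * d then F j (3 * d - i) (i - j) else 0) = c2b (3 * d) F"
    by (simp add: c2b_def)
  show ?thesis using E2 by (simp only: mult_ge.simps pm.simps wt.simps e1 e2 mult2_mT[OF supp_c(3)] mult2_mT[OF supp_c(4)])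
qed

lemma P1_E1:
  assumes h: "homog_poly n F" and m: "mult3_ge n F (1, 0, 0) \<mu>"
  shows "pm n F (OnE1 ab) \<mu>"
proof -
  have H: "\<forall>a b c. F a b c \<noteq> 0 \<longrightarrow> \<mu> \<le> b + c" using m P1_char[OF h] by blast
  have za: "c1a n F i b = 0" if "i < \<mu>" for i b
    using H that by (force simp: c1a_def)
  have zb: "c1b n F i b = 0" if "i < \<mu>" for i b
    using H that by (force simp: c1b_def)
  have "mT t (c1a n F) \<mu>" for t using za by (auto simp: mT_def Tc_def tay1_def)
  moreover have "mT t (c1b n F) \<mu>" for t using zb by (auto simp: mT_def Tc_def tay1_def)
  ultimately show ?thesis by (cases ab) auto
qed

lemma P2_E2:
  assumes h: "homog_poly n F" and m: "mult3_ge n F (0, 1, 0) \<mu>"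
  shows "pm n F (OnE2 ab) \<mu>"
proof -
  have H: "\<forall>a b c. F a b c \<noteq> 0 \<longrightarrow> \<mu> \<le> a + c" using m P2_char[OF h] by blast
  have za: "c2a n F i b = 0" if "i < \<mu>" for i b
    using H that by (force simp: c2a_def)
  have zb: "c2b n F i b = 0" if "i < \<mu>" for i b
    using H that by (force simp: c2b_def)
  have "mT t (c2a n F) \<mu>" for t using za by (auto simp: mT_def Tc_def tay1_def)
  moreover have "mT t (c2b n F) \<mu>" for t using zb by (auto simp: mT_def Tc_def tay1_def)
  ultimately show ?thesis by (cases ab) auto
qed

lemma taylor3_top:
  assumes h: "homog_poly n F" and s: "a + b + c = n"
  shows "taylor3 n F p a b c = F a b c"
proof -
  define x y z where "x = fst p" "y = fst (snd p)" "z = snd (snd p)"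
  have big: "F a' b' c' = 0" if "a + b + c < a' + b' + c'" for a' b' c'
  proof (rule ccontr)
    assume "F a' b' c' \<noteq> 0" from homogD[OF h this] that s show False by simp
  qed
  have inner0: "tay1 n (\<lambda>c'. F a' b' c') z c = 0" if "a \<le> a'" "b \<le> b'" "(a', b') \<noteq> (a, b)" for a' b'
    by (rule tay1_low0) (use that in \<open>auto intro!: big\<close>)
  have bn: "a \<le> n" "b \<le> n" "c \<le> n" using s by auto
  have innerab: "tay1 n (\<lambda>c'. F a b c') z c = F a b c"
    by (rule tay1_low) (use bn in \<open>auto intro!: big\<close>)
  have mid0: "tay1 n (\<lambda>b'. tay1 n (\<lambda>c'. F a' b' c') z c) y b = 0" if "a < a'" for a'
    by (rule tay1_low0) (use that in \<open>auto intro!: inner0\<close>)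
  have midab: "tay1 n (\<lambda>b'. tay1 n (\<lambda>c'. F a b' c') z c) y b = F a b c"
  proof -
    have "tay1 n (\<lambda>b'. tay1 n (\<lambda>c'. F a b' c') z c) y b = tay1 n (\<lambda>c'. F a b c') z c"
      by (rule tay1_low) (use bn in \<open>auto intro!: inner0\<close>)
    thus ?thesis using innerab by simp
  qed
  have "tay1 n (\<lambda>a'. tay1 n (\<lambda>b'. tay1 n (\<lambda>c'. F a' b' c') z c) y b) x a = tay1 n (\<lambda>b'. tay1 n (\<lambda>c'. F a b' c') z c) y b"
    by (rule tay1_low) (use bn in \<open>auto intro!: mid0\<close>)
  thus ?thesis unfolding taylor3_nf x_y_z_def[symmetric] using midab by simp
qed

lemma tay1_allzero:
  assumes z: "\<And>j. tay1 N g t j = 0"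
  shows "b \<le> N \<Longrightarrow> g b = 0"
proof (induction "N - b" arbitrary: b rule: less_induct)
  case less
  have "tay1 N g t b = g b"
    by (rule tay1_low) (use less in auto)
  thus ?case using z by simp
qed

lemma chart_zero:
  assumes s: "\<And>i j. h i j \<noteq> 0 \<Longrightarrow> j \<le> i \<and> i \<le> n" and m: "mT t h (Suc (2 * n))"
  shows "h i b = 0"
proof (rule ccontr)
  assume nz: "h i b \<noteq> 0"
  hence bi: "b \<le> i" "i \<le> n" using s by auto
  have "tay1 i (h i) t j = 0" for j
  proof (cases "j \<le> i")
    case True
    hence "i + j < Suc (2 * n)" using bi by simp
    thus ?thesis using m by (simp add: mT_def Tc_def)
  next
    case False
    thus ?thesis by (intro tay1_low0) auto
  qed
  from tay1_allzero[OF this bi(1)] nz show False by simp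
qed

definition nonzero :: "poly3 \<Rightarrow> bool" where
  "nonzero F \<longleftrightarrow> (\<exists>a b c. F a b c \<noteq> 0)"

lemma no_small:
  assumes sec: "section_dL d F" and mg: "mult_ge d F q K" and K: "5 * d < K"
  shows False
proof -
  have h: "homog_poly (3 * d) F" using sec by (simp add: section_dL_def)
  obtain a b c where F: "F a b c \<noteq> 0" using sec by (auto simp: section_dL_def)
  have s: "a + b + c = 3 * d" using homogD[OF h F] .
  have pmq: "pm (3 * d) F q (K + wt d q)" using mg by (simp add: mult_ge_pm)
  show False
  proof (cases q rule: pt_cases)
    case (Off p)
    have "mult3_ge (3 * d) F p K" using pmq Off by simp
    hence "taylor3 (3 * d) F p a b c = 0" using s K by (simp add: mult3_ge_def)
    thus False using taylor3_top[OF h s] F by simp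
  next
    case (E1 a0 b0)
    have KK: "Suc (2 * (3 * d)) \<le> K + d" using K by simp
    show False
    proof (cases "a0 = 0")
      case True
      hence "mT 0 (c1b (3 * d) F) (K + d)" using pmq E1 by simp
      hence "mT 0 (c1b (3 * d) F) (Suc (2 * (3 * d)))" using KK by (rule mT_mono)
      note mTf = this
      have sc: "\<And>i j. c1b (3 * d) F i j \<noteq> 0 \<Longrightarrow> j \<le> i \<and> i \<le> 3 * d" by (rule supp_c(2))
      have "c1b (3 * d) F (b + c) b = 0" by (rule chart_zero[OF sc mTf])
      moreover have "3 * d - (b + c) = a" using s by arith
      ultimately show False using F s by (simp add: c1b_def)
    next
      case False
      hence "mT (b0 / a0) (c1a (3 * d) F) (K + d)" using pmq E1 by simp
      hence "mT (b0 / a0) (c1a (3 * d) F) (Suc (2 * (3 * d)))" using KK by (rule mT_mono)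
      note mTf = this
      have sc: "\<And>i j. c1a (3 * d) F i j \<noteq> 0 \<Longrightarrow> j \<le> i \<and> i \<le> 3 * d" by (rule supp_c(1))
      have "c1a (3 * d) F (b + c) c = 0" by (rule chart_zero[OF sc mTf])
      moreover have "3 * d - (b + c) = a" using s by arith
      ultimately show False using F s by (simp add: c1a_def)
    qed
  next
    case (E2 a0 b0)
    have KK: "Suc (2 * (3 * d)) \<le> K + d" using K by simp
    show False
    proof (cases "a0 = 0")
      case True
      hence "mT 0 (c2b (3 * d) F) (K + d)" using pmq E2 by simp
      hence "mT 0 (c2b (3 * d) F) (Suc (2 * (3 * d)))" using KK by (rule mT_mono)
      note mTf = this
      have sc: "\<And>i j. c2b (3 * d) F i j \<noteq> 0 \<Longrightarrow> j \<le> i \<and> i \<le> 3 * d" by (rule supp_c(4))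
      have "c2b (3 * d) F (a + c) a = 0" by (rule chart_zero[OF sc mTf])
      moreover have "3 * d - (a + c) = b" using s by arith
      ultimately show False using F s by (simp add: c2b_def)
    next
      case False
      hence "mT (b0 / a0) (c2a (3 * d) F) (K + d)" using pmq E2 by simp
      hence "mT (b0 / a0) (c2a (3 * d) F) (Suc (2 * (3 * d)))" using KK by (rule mT_mono)
      note mTf = this
      have sc: "\<And>i j. c2a (3 * d) F i j \<noteq> 0 \<Longrightarrow> j \<le> i \<and> i \<le> 3 * d" by (rule supp_c(3))
      have "c2a (3 * d) F (a + c) c = 0" by (rule chart_zero[OF sc mTf])
      moreover have "3 * d - (a + c) = b" using s by arith
      ultimately show False using F s by (simp add: c2a_def)
    qed
  qed
qed

lemma dxD: "dx F a b c \<noteq> 0 \<Longrightarrow> F (Suc a) b c \<noteq> 0" by (simp add: dx_def)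
lemma dyD: "dy F a b c \<noteq> 0 \<Longrightarrow> F a (Suc b) c \<noteq> 0" by (simp add: dy_def)
lemma dzD: "dz F a b c \<noteq> 0 \<Longrightarrow> F a b (Suc c) \<noteq> 0" by (simp add: dz_def)
lemma mzD: "mz F a b c \<noteq> 0 \<Longrightarrow> c \<noteq> 0 \<and> F a b (c - 1) \<noteq> 0" by (simp add: mz_def split: if_splits)
lemma dxI: "F (Suc a) b c \<noteq> 0 \<Longrightarrow> dx F a b c \<noteq> 0" by (simp add: dx_def del: of_nat_Suc)
lemma dyI: "F a (Suc b) c \<noteq> 0 \<Longrightarrow> dy F a b c \<noteq> 0" by (simp add: dy_def del: of_nat_Suc)
lemma dzI: "F a b (Suc c) \<noteq> 0 \<Longrightarrow> dz F a b c \<noteq> 0" by (simp add: dz_def del: of_nat_Suc)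
lemma mxI: "F a b c \<noteq> 0 \<Longrightarrow> mx F (Suc a) b c \<noteq> 0" by (simp add: mx_def)
lemma myI: "F a b c \<noteq> 0 \<Longrightarrow> my F a (Suc b) c \<noteq> 0" by (simp add: my_def)
lemma mzI: "F a b c \<noteq> 0 \<Longrightarrow> mz F a b (Suc c) \<noteq> 0" by (simp add: mz_def)

lemma lin_nz:
  assumes h: "homog_poly n F" and F: "F a0 b0 c0 \<noteq> 0" and ab: "\<alpha> \<noteq> 0 \<or> \<beta> \<noteq> 0"
  shows "\<exists>a b c. lin \<alpha> \<beta> F a b c \<noteq> 0"
proof (cases "\<beta> = 0")
  case True
  hence "\<alpha> \<noteq> 0" using ab by simp
  hence "lin \<alpha> \<beta> F (Suc a0) b0 c0 \<noteq> 0" using True F by (simp add: lin_def mx_def)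
  thus ?thesis by blast
next
  case False
  define C where "C = {c. \<exists>a b. F a b c \<noteq> 0}"
  have fin: "finite C"
  proof (rule finite_subset)
    show "C \<subseteq> {..n}"
    proof
      fix x assume "x \<in> C"
      then obtain a b where "F a b x \<noteq> 0" by (auto simp: C_def)
      from homogD[OF h this] show "x \<in> {..n}" by simp
    qed
  qed simp
  have "c0 \<in> C" using F by (auto simp: C_def)
  hence "Max C \<in> C" using fin by (auto intro: Max_in)
  then obtain a b where ab': "F a b (Max C) \<noteq> 0" by (auto simp: C_def)
  have "Suc (Max C) \<notin> C"
  proof
    assume "Suc (Max C) \<in> C"
    hence "Suc (Max C) \<le> Max C" using Max_ge[OF fin] by blast
    thus False by simp
  qed
  hence z: "F a' b' (Suc (Max C)) = 0" for a' b' by (auto simp: C_def)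
  have "lin \<alpha> \<beta> F a b (Suc (Max C)) = \<beta> * F a b (Max C)"
    by (simp add: lin_def mx_def mz_def z)
  hence "lin \<alpha> \<beta> F a b (Suc (Max C)) \<noteq> 0" using False ab' by simp
  thus ?thesis by blast
qed

fun Lq :: "S2pt \<Rightarrow> poly3 \<Rightarrow> poly3" where
  "Lq (Off p) F = lin (snd (snd p)) (- fst p) F"
| "Lq (OnE1 ab) F = mz F"
| "Lq (OnE2 ab) F = mz F"

definition cub :: "S2pt \<Rightarrow> poly3 \<Rightarrow> poly3" where
  "cub q F = mx (my (Lq q F))"

lemma homog_Lq: "homog_poly n F \<Longrightarrow> homog_poly (Suc n) (Lq q F)"
  by (cases q) (auto intro: homog_lin homog_mz)

lemma homog_cub: "homog_poly n F \<Longrightarrow> homog_poly (Suc (Suc (Suc n))) (cub q F)"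
  unfolding cub_def by (intro homog_mx homog_my homog_Lq)

lemma pm_Lq:
  assumes h: "homog_poly n F" and m: "pm n F q' M"
  shows "pm (Suc n) (Lq q F) q' (if q' = q then Suc M else M)"
proof (cases q rule: pt_cases)
  case (Off p)
  have X: "pm (Suc n) (lin (snd (snd p)) (- fst p) F) q' (M + gl (snd (snd p)) (- fst p) q')"
    by (rule pm_lin[OF h m])
  show ?thesis
  proof (cases "q' = q")
    case True
    have "gl (snd (snd p)) (- fst p) q' = 1" using True Off by (simp add: mult.commute)
    thus ?thesis using X True Off by simp
  next
    case False
    thus ?thesis using X Off by (auto intro: pm_mono)
  qed
next
  case (E1 a b)
  have X: "pm (Suc n) (mz F) q' (M + gz q')" by (rule pm_mz[OF h m])
  show ?thesis
  proof (cases "q' = q")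
    case True thus ?thesis using X E1 by simp
  next
    case False thus ?thesis using X E1 by (auto intro: pm_mono)
  qed
next
  case (E2 a b)
  have X: "pm (Suc n) (mz F) q' (M + gz q')" by (rule pm_mz[OF h m])
  show ?thesis
  proof (cases "q' = q")
    case True thus ?thesis using X E2 by simp
  next
    case False thus ?thesis using X E2 by (auto intro: pm_mono)
  qed
qed

lemma pm_cub:
  assumes h: "homog_poly n F" and m: "pm n F q' M"
  shows "pm (Suc (Suc (Suc n))) (cub q F) q' ((if q' = q then Suc M else M) + gy q' + gx q')"
proof -
  have h1: "homog_poly (Suc n) (Lq q F)" by (rule homog_Lq[OF h])
  have h2: "homog_poly (Suc (Suc n)) (my (Lq q F))" by (rule homog_my[OF h1])
  have p1: "pm (Suc n) (Lq q F) q' (if q' = q then Suc M else M)" by (rule pm_Lq[OF h m])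
  have p2: "pm (Suc (Suc n)) (my (Lq q F)) q' ((if q' = q then Suc M else M) + gy q')" by (rule pm_my[OF h1 p1])
  show ?thesis unfolding cub_def by (rule pm_mx[OF h2 p2])
qed

lemma nz_cub:
  assumes v: "valid_pt q" and h: "homog_poly n F" and nz: "nonzero F"
  shows "nonzero (cub q F)"
proof -
  obtain a b c where F: "F a b c \<noteq> 0" using nz by (auto simp: nonzero_def)
  have "nonzero (Lq q F)"
  proof (cases q rule: pt_cases)
    case (Off p)
    obtain x y z where p: "p = (x, y, z)" by (cases p) auto
    have "z \<noteq> 0 \<or> - x \<noteq> 0" using v Off p by auto
    from lin_nz[OF h F this] show ?thesis using Off p by (simp add: nonzero_def)
  next
    case (E1 a' b') thus ?thesis using mzI[of F a b c, OF F] by (auto simp: nonzero_def)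
  next
    case (E2 a' b') thus ?thesis using mzI[of F a b c, OF F] by (auto simp: nonzero_def)
  qed
  then obtain a b c where "Lq q F a b c \<noteq> 0" by (auto simp: nonzero_def)
  hence "cub q F (Suc a) (Suc b) c \<noteq> 0" unfolding cub_def by (intro mxI myI)
  thus ?thesis by (auto simp: nonzero_def)
qed

lemma iter_cub:
  assumes v: "valid_pt q" and h: "homog_poly n F" and nz: "nonzero F"
  shows "homog_poly (n + 3 * k) ((cub q ^^ k) F) \<and> nonzero ((cub q ^^ k) F) \<and>
    (\<forall>q' M. pm n F q' M \<longrightarrow> pm (n + 3 * k) ((cub q ^^ k) F) q' (M + k * (if q' = q then 1 else 0) + k * gy q' + k * gx q'))"
proof (induction k)
  case 0 thus ?case using h nz by simp
next
  case (Suc k)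
  let ?G = "(cub q ^^ k) F"
  have hG: "homog_poly (n + 3 * k) ?G" and nzG: "nonzero ?G" using Suc.IH by auto
  have e: "n + 3 * Suc k = Suc (Suc (Suc (n + 3 * k)))" by simp
  have "homog_poly (n + 3 * Suc k) ((cub q ^^ Suc k) F)" unfolding e by (simp add: homog_cub[OF hG])
  moreover have "nonzero ((cub q ^^ Suc k) F)" using nz_cub[OF v hG nzG] by simp
  moreover have "pm (n + 3 * Suc k) ((cub q ^^ Suc k) F) q' (M + Suc k * (if q' = q then 1 else 0) + Suc k * gy q' + Suc k * gx q')"
    if pmF: "pm n F q' M" for q' M
  proof -
    have "pm (n + 3 * k) ?G q' (M + k * (if q' = q then 1 else 0) + k * gy q' + k * gx q')"
      using Suc.IH pmF by blast
    from pm_cub[OF hG this, of q]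
    have "pm (Suc (Suc (Suc (n + 3 * k)))) (cub q ?G) q'
      ((if q' = q then Suc (M + k * (if q' = q then 1 else 0) + k * gy q' + k * gx q') else (M + k * (if q' = q then 1 else 0) + k * gy q' + k * gx q')) + gy q' + gx q')" .
    moreover have "((if q' = q then Suc (M + k * (if q' = q then 1 else 0) + k * gy q' + k * gx q') else (M + k * (if q' = q then 1 else 0) + k * gy q' + k * gx q')) + gy q' + gx q')
       = M + Suc k * (if q' = q then 1 else 0) + Suc k * gy q' + Suc k * gx q'"
      by (cases "q' = q") simp_all
    ultimately show ?thesis unfolding e by simp
  qed
  ultimately show ?case by blast
qed

definition F0 :: poly3 where "F0 = (\<lambda>a b c. if a = 0 \<and> b = 0 \<and> c = 0 then 1 else 0)"

lemma exist:
  assumes "finite Z" "\<forall>q\<in>Z. valid_pt q"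
  shows "\<exists>N F. homog_poly (3 * N) F \<and> nonzero F \<and> mult3_ge (3 * N) F (1, 0, 0) N \<and>
     mult3_ge (3 * N) F (0, 1, 0) N \<and> (\<forall>q\<in>Z. pm (3 * N) F q (K + wt N q))"
  using assms
proof (induction Z rule: finite_induct)
  case empty
  have "homog_poly (3 * 0) F0" by (simp add: homog_poly_def F0_def)
  moreover have "nonzero F0" by (auto simp: nonzero_def F0_def intro: exI[of _ 0])
  moreover have "mult3_ge (3 * 0) F0 p 0" for p by (simp add: mult3_ge_def)
  ultimately show ?case by blast
next
  case (insert q Z)
  obtain N F where h: "homog_poly (3 * N) F" and nz: "nonzero F" and P1: "mult3_ge (3 * N) F (1, 0, 0) N"
    and P2: "mult3_ge (3 * N) F (0, 1, 0) N" and Zq: "\<forall>q\<in>Z. pm (3 * N) F q (K + wt N q)"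
    using insert by auto
  have v: "valid_pt q" using insert by simp
  let ?G = "(cub q ^^ K) F"
  note it = iter_cub[OF v h nz, of K]
  have e: "3 * N + 3 * K = 3 * (N + K)" by simp
  have hG: "homog_poly (3 * (N + K)) ?G" using it e by metis
  have nzG: "nonzero ?G" using it by blast
  have pmG: "pm (3 * (N + K)) ?G q' (M + K * (if q' = q then 1 else 0) + K * gy q' + K * gx q')"
    if "pm (3 * N) F q' M" for q' M
    using it that e by metis
  have q1: "q \<noteq> Off (1, 0, 0)" "q \<noteq> Off (0, 1, 0)" using v by auto
  have "pm (3 * (N + K)) ?G (Off (1, 0, 0)) (N + K * (if Off (1, 0, 0) = q then 1 else 0) + K * gy (Off (1, 0, 0)) + K * gx (Off (1, 0, 0)))"
    by (rule pmG) (simp add: P1)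
  hence P1G: "mult3_ge (3 * (N + K)) ?G (1, 0, 0) (N + K)" using q1 by simp
  have "pm (3 * (N + K)) ?G (Off (0, 1, 0)) (N + K * (if Off (0, 1, 0) = q then 1 else 0) + K * gy (Off (0, 1, 0)) + K * gx (Off (0, 1, 0)))"
    by (rule pmG) (simp add: P2)
  hence P2G: "mult3_ge (3 * (N + K)) ?G (0, 1, 0) (N + K)" using q1 by simp
  have ZG: "pm (3 * (N + K)) ?G q' (K + wt (N + K) q')" if q'Z: "q' \<in> Z" for q'
  proof -
    have "q' \<noteq> q" using q'Z insert by auto
    from pmG[OF Zq[rule_format, OF q'Z]]
    have X: "pm (3 * (N + K)) ?G q' (K + wt N q' + K * (if q' = q then 1 else 0) + K * gy q' + K * gx q')" .
    show ?thesis
      by (rule pm_mono[OF X]) (cases q' rule: pt_cases, auto)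
  qed
  have q0: "pm (3 * N) F q (wt N q)"
  proof (cases q rule: pt_cases)
    case (Off p) thus ?thesis by (simp add: mult3_ge_def)
  next
    case (E1 a b)
    have "pm (3 * N) F (OnE1 (a, b)) N" by (rule P1_E1[OF h P1])
    thus ?thesis using E1 by (simp only: wt.simps)
  next
    case (E2 a b)
    have "pm (3 * N) F (OnE2 (a, b)) N" by (rule P2_E2[OF h P2])
    thus ?thesis using E2 by (simp only: wt.simps)
  qed
  have qG: "pm (3 * (N + K)) ?G q (K + wt (N + K) q)"
  proof -
    from pmG[OF q0]
    have X: "pm (3 * (N + K)) ?G q (wt N q + K * (if q = q then 1 else 0) + K * gy q + K * gx q)" .
    show ?thesis
      by (rule pm_mono[OF X]) (cases q rule: pt_cases, auto)
  qed
  show ?case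
    by (rule exI[of _ "N + K"], rule exI[of _ ?G]) (use hG nzG P1G P2G ZG qG in auto)
qed

lemma stx: "homog_poly n F \<and> pm n F q M \<Longrightarrow> 0 < n \<Longrightarrow> homog_poly (n - 1) (dx F) \<and> pm (n - 1) (dx F) q (M - ddx q)"
  using homog_dx pm_dx by blast
lemma sty: "homog_poly n F \<and> pm n F q M \<Longrightarrow> 0 < n \<Longrightarrow> homog_poly (n - 1) (dy F) \<and> pm (n - 1) (dy F) q (M - ddy q)"
  using homog_dy pm_dy by blast
lemma stz: "homog_poly n F \<and> pm n F q M \<Longrightarrow> 0 < n \<Longrightarrow> homog_poly (n - 1) (dz F) \<and> pm (n - 1) (dz F) q (M - ddz q)"
  using homog_dz pm_dz by blast
lemma stmz: "homog_poly n F \<and> pm n F q M \<Longrightarrow> homog_poly (Suc n) (mz F) \<and> pm (Suc n) (mz F) q M"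
  using homog_mz pm_mz pm_mono le_add1 by blast

lemma finish:
  assumes hG: "homog_poly (3 * (d - 1)) G" and nzG: "G a b c \<noteq> 0"
    and P1G: "\<forall>a b c. G a b c \<noteq> 0 \<longrightarrow> d - 1 \<le> b + c"
    and P2G: "\<forall>a b c. G a b c \<noteq> 0 \<longrightarrow> d - 1 \<le> a + c"
    and pmG: "\<forall>q\<in>Z. pm (3 * (d - 1)) G q (m + wt (d - 1) q)"
  shows "\<exists>G. section_dL (d - 1) G \<and> (\<forall>q\<in>Z. mult_ge (d - 1) G q m)"
proof (intro exI conjI)
  show "section_dL (d - 1) G"
    unfolding section_dL_def using hG nzG P1_char[OF hG] P2_char[OF hG] P1G P2G by blast
  show "\<forall>q\<in>Z. mult_ge (d - 1) G q m" using pmG by (simp add: mult_ge_pm)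
qed

context
  fixes d :: nat and F :: poly3 and Z :: "S2pt set" and m :: nat
  assumes h: "homog_poly (3 * d) F" and d2: "2 \<le> d"
    and P1F: "\<forall>a b c. F a b c \<noteq> 0 \<longrightarrow> d \<le> b + c"
    and P2F: "\<forall>a b c. F a b c \<noteq> 0 \<longrightarrow> d \<le> a + c"
    and pmF: "\<forall>q\<in>Z. pm (3 * d) F q (m + 5 + wt d q)"
begin

lemma sumF: "F a b c \<noteq> 0 \<Longrightarrow> a + b + c = 3 * d"
  by (rule homogD[OF h])

lemma pos: "0 < 3 * d" "0 < 3 * d - 1" "0 < 3 * d - 1 - 1" "0 < 3 * d - 1 - 1 - 1" "0 < 3 * d - 1 - 1 - 1 - 1"
  using d2 by auto

lemma case1:
  assumes c1: "F A B C \<noteq> 0" "2 \<le> A" "2 \<le> B" "1 \<le> C"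
  shows "\<exists>G. section_dL (d - 1) G \<and> (\<forall>q\<in>Z. mult_ge (d - 1) G q m)"
proof -
  define G where "G = mz (mz (dx (dx (dy (dy (dz F))))))"
  have en: "Suc (Suc (3 * d - 1 - 1 - 1 - 1 - 1)) = 3 * (d - 1)" using d2 by simp
  have pmG: "\<forall>q\<in>Z. pm (3 * (d - 1)) G q (m + wt (d - 1) q)"
  proof
    fix q assume qZ: "q \<in> Z"
    have s0: "homog_poly (3 * d) F \<and> pm (3 * d) F q (m + 5 + wt d q)" using h pmF qZ by blast
    note s1 = stz[OF s0 pos(1)]
    note s2 = sty[OF s1 pos(2)]
    note s3 = sty[OF s2 pos(3)]
    note s4 = stx[OF s3 pos(4)]
    note s5 = stx[OF s4 pos(5)]
    note s6 = stmz[OF s5]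
    note s7 = stmz[OF s6]
    have X: "pm (3 * (d - 1)) G q (m + 5 + wt d q - ddz q - ddy q - ddy q - ddx q - ddx q)" using s7 unfolding G_def en by blast
    show "pm (3 * (d - 1)) G q (m + wt (d - 1) q)"
      by (rule pm_mono[OF X]) (use d2 in \<open>cases q rule: pt_cases, auto\<close>)
  qed
  have hG: "homog_poly (3 * (d - 1)) G"
  proof -
    obtain q :: S2pt where True by simp
    have s0: "homog_poly (3 * d) F \<and> pm (3 * d) F q 0" using h pm_0 by blast
    note s1 = stz[OF s0 pos(1)]
    note s2 = sty[OF s1 pos(2)]
    note s3 = sty[OF s2 pos(3)]
    note s4 = stx[OF s3 pos(4)]
    note s5 = stx[OF s4 pos(5)]
    note s6 = stmz[OF s5]
    note s7 = stmz[OF s6]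
    show ?thesis using s7 unfolding G_def en by blast
  qed
  define A' B' C' where "A' = A - 2" "B' = B - 2" "C' = C - 1"
  have ABC: "A = Suc (Suc A')" "B = Suc (Suc B')" "C = Suc C'" using c1 unfolding A'_B'_C'_def by arith+
  have nzG: "G A' B' (Suc (Suc C')) \<noteq> 0" unfolding G_def
    by (intro mzI dxI dyI dzI) (use c1 ABC in simp)
  have P1G: "\<forall>a b c. G a b c \<noteq> 0 \<longrightarrow> d - 1 \<le> b + c"
  proof (intro allI impI)
    fix a b c assume "G a b c \<noteq> 0"
    hence c2: "2 \<le> c" and F': "F (Suc (Suc a)) (Suc (Suc b)) (Suc (c - 1 - 1)) \<noteq> 0"
      unfolding G_def by (auto dest!: mzD dxD dyD dzD)
    show "d - 1 \<le> b + c" using P1F F' c2 by force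
  qed
  have P2G: "\<forall>a b c. G a b c \<noteq> 0 \<longrightarrow> d - 1 \<le> a + c"
  proof (intro allI impI)
    fix a b c assume "G a b c \<noteq> 0"
    hence c2: "2 \<le> c" and F': "F (Suc (Suc a)) (Suc (Suc b)) (Suc (c - 1 - 1)) \<noteq> 0"
      unfolding G_def by (auto dest!: mzD dxD dyD dzD)
    show "d - 1 \<le> a + c" using P2F F' c2 by force
  qed
  show ?thesis by (rule finish[OF hG nzG P1G P2G pmG])
qed

lemma case2:
  assumes c2: "F A B C \<noteq> 0" "3 \<le> A" "2 \<le> B"
  shows "\<exists>G. section_dL (d - 1) G \<and> (\<forall>q\<in>Z. mult_ge (d - 1) G q m)"
proof -
  define G where "G = mz (mz (dx (dx (dx (dy (dy F))))))"
  have en: "Suc (Suc (3 * d - 1 - 1 - 1 - 1 - 1)) = 3 * (d - 1)" using d2 by simp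
  have pmG: "\<forall>q\<in>Z. pm (3 * (d - 1)) G q (m + wt (d - 1) q)"
  proof
    fix q assume qZ: "q \<in> Z"
    have s0: "homog_poly (3 * d) F \<and> pm (3 * d) F q (m + 5 + wt d q)" using h pmF qZ by blast
    note s1 = sty[OF s0 pos(1)]
    note s2 = sty[OF s1 pos(2)]
    note s3 = stx[OF s2 pos(3)]
    note s4 = stx[OF s3 pos(4)]
    note s5 = stx[OF s4 pos(5)]
    note s6 = stmz[OF s5]
    note s7 = stmz[OF s6]
    have X: "pm (3 * (d - 1)) G q (m + 5 + wt d q - ddy q - ddy q - ddx q - ddx q - ddx q)" using s7 unfolding G_def en by blast
    show "pm (3 * (d - 1)) G q (m + wt (d - 1) q)"
      by (rule pm_mono[OF X]) (use d2 in \<open>cases q rule: pt_cases, auto\<close>)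
  qed
  have hG: "homog_poly (3 * (d - 1)) G"
  proof -
    obtain q :: S2pt where True by simp
    have s0: "homog_poly (3 * d) F \<and> pm (3 * d) F q 0" using h pm_0 by blast
    note s1 = sty[OF s0 pos(1)]
    note s2 = sty[OF s1 pos(2)]
    note s3 = stx[OF s2 pos(3)]
    note s4 = stx[OF s3 pos(4)]
    note s5 = stx[OF s4 pos(5)]
    note s6 = stmz[OF s5]
    note s7 = stmz[OF s6]
    show ?thesis using s7 unfolding G_def en by blast
  qed
  define A' B' where "A' = A - 3" "B' = B - 2"
  have ABC: "A = Suc (Suc (Suc A'))" "B = Suc (Suc B')" using c2 unfolding A'_B'_def by arith+
  have nzG: "G A' B' (Suc (Suc C)) \<noteq> 0" unfolding G_def
    by (intro mzI dxI dyI) (use c2 ABC in simp)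
  have P1G: "\<forall>a b c. G a b c \<noteq> 0 \<longrightarrow> d - 1 \<le> b + c"
  proof (intro allI impI)
    fix a b c assume "G a b c \<noteq> 0"
    hence c2: "2 \<le> c" and F': "F (Suc (Suc (Suc a))) (Suc (Suc b)) (c - 1 - 1) \<noteq> 0"
      unfolding G_def by (auto dest!: mzD dxD dyD)
    show "d - 1 \<le> b + c" using P1F F' c2 by force
  qed
  have P2G: "\<forall>a b c. G a b c \<noteq> 0 \<longrightarrow> d - 1 \<le> a + c"
  proof (intro allI impI)
    fix a b c assume "G a b c \<noteq> 0"
    hence c2: "2 \<le> c" and F': "F (Suc (Suc (Suc a))) (Suc (Suc b)) (c - 1 - 1) \<noteq> 0"
      unfolding G_def by (auto dest!: mzD dxD dyD)
    show "d - 1 \<le> a + c" using P2F F' c2 by force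
  qed
  show ?thesis by (rule finish[OF hG nzG P1G P2G pmG])
qed

lemma case3:
  assumes c3: "F A B C \<noteq> 0" "2 \<le> A" "3 \<le> B"
  shows "\<exists>G. section_dL (d - 1) G \<and> (\<forall>q\<in>Z. mult_ge (d - 1) G q m)"
proof -
  define G where "G = mz (mz (dx (dx (dy (dy (dy F))))))"
  have en: "Suc (Suc (3 * d - 1 - 1 - 1 - 1 - 1)) = 3 * (d - 1)" using d2 by simp
  have pmG: "\<forall>q\<in>Z. pm (3 * (d - 1)) G q (m + wt (d - 1) q)"
  proof
    fix q assume qZ: "q \<in> Z"
    have s0: "homog_poly (3 * d) F \<and> pm (3 * d) F q (m + 5 + wt d q)" using h pmF qZ by blast
    note s1 = sty[OF s0 pos(1)]
    note s2 = sty[OF s1 pos(2)]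
    note s3 = sty[OF s2 pos(3)]
    note s4 = stx[OF s3 pos(4)]
    note s5 = stx[OF s4 pos(5)]
    note s6 = stmz[OF s5]
    note s7 = stmz[OF s6]
    have X: "pm (3 * (d - 1)) G q (m + 5 + wt d q - ddy q - ddy q - ddy q - ddx q - ddx q)" using s7 unfolding G_def en by blast
    show "pm (3 * (d - 1)) G q (m + wt (d - 1) q)"
      by (rule pm_mono[OF X]) (use d2 in \<open>cases q rule: pt_cases, auto\<close>)
  qed
  have hG: "homog_poly (3 * (d - 1)) G"
  proof -
    obtain q :: S2pt where True by simp
    have s0: "homog_poly (3 * d) F \<and> pm (3 * d) F q 0" using h pm_0 by blast
    note s1 = sty[OF s0 pos(1)]
    note s2 = sty[OF s1 pos(2)]
    note s3 = sty[OF s2 pos(3)]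
    note s4 = stx[OF s3 pos(4)]
    note s5 = stx[OF s4 pos(5)]
    note s6 = stmz[OF s5]
    note s7 = stmz[OF s6]
    show ?thesis using s7 unfolding G_def en by blast
  qed
  define A' B' where "A' = A - 2" "B' = B - 3"
  have ABC: "A = Suc (Suc A')" "B = Suc (Suc (Suc B'))" using c3 unfolding A'_B'_def by arith+
  have nzG: "G A' B' (Suc (Suc C)) \<noteq> 0" unfolding G_def
    by (intro mzI dxI dyI) (use c3 ABC in simp)
  have P1G: "\<forall>a b c. G a b c \<noteq> 0 \<longrightarrow> d - 1 \<le> b + c"
  proof (intro allI impI)
    fix a b c assume "G a b c \<noteq> 0"
    hence c2: "2 \<le> c" and F': "F (Suc (Suc a)) (Suc (Suc (Suc b))) (c - 1 - 1) \<noteq> 0"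
      unfolding G_def by (auto dest!: mzD dxD dyD)
    show "d - 1 \<le> b + c" using P1F F' c2 by force
  qed
  have P2G: "\<forall>a b c. G a b c \<noteq> 0 \<longrightarrow> d - 1 \<le> a + c"
  proof (intro allI impI)
    fix a b c assume "G a b c \<noteq> 0"
    hence c2: "2 \<le> c" and F': "F (Suc (Suc a)) (Suc (Suc (Suc b))) (c - 1 - 1) \<noteq> 0"
      unfolding G_def by (auto dest!: mzD dxD dyD)
    show "d - 1 \<le> a + c" using P2F F' c2 by force
  qed
  show ?thesis by (rule finish[OF hG nzG P1G P2G pmG])
qed

lemma case4:
  assumes c4: "F A B C \<noteq> 0" "3 \<le> B" and n3: "\<forall>A B C. F A B C \<noteq> 0 \<longrightarrow> \<not> (2 \<le> A \<and> 3 \<le> B)"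
  shows "\<exists>G. section_dL (d - 1) G \<and> (\<forall>q\<in>Z. mult_ge (d - 1) G q m)"
proof -
  define G where "G = dy (dy (dy F))"
  have en: "3 * d - 1 - 1 - 1 = 3 * (d - 1)" using d2 by simp
  have pmG: "\<forall>q\<in>Z. pm (3 * (d - 1)) G q (m + wt (d - 1) q)"
  proof
    fix q assume qZ: "q \<in> Z"
    have s0: "homog_poly (3 * d) F \<and> pm (3 * d) F q (m + 5 + wt d q)" using h pmF qZ by blast
    note s1 = sty[OF s0 pos(1)]
    note s2 = sty[OF s1 pos(2)]
    note s3 = sty[OF s2 pos(3)]
    have X: "pm (3 * (d - 1)) G q (m + 5 + wt d q - ddy q - ddy q - ddy q)" using s3 unfolding G_def en by blast
    show "pm (3 * (d - 1)) G q (m + wt (d - 1) q)"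
      by (rule pm_mono[OF X]) (use d2 in \<open>cases q rule: pt_cases, auto\<close>)
  qed
  have hG: "homog_poly (3 * (d - 1)) G"
  proof -
    obtain q :: S2pt where True by simp
    have s0: "homog_poly (3 * d) F \<and> pm (3 * d) F q 0" using h pm_0 by blast
    note s1 = sty[OF s0 pos(1)]
    note s2 = sty[OF s1 pos(2)]
    note s3 = sty[OF s2 pos(3)]
    show ?thesis using s3 unfolding G_def en by blast
  qed
  define B' where "B' = B - 3"
  have ABC: "B = Suc (Suc (Suc B'))" using c4 unfolding B'_def by arith
  have nzG: "G A B' C \<noteq> 0" unfolding G_def
    by (intro dyI) (use c4 ABC in simp)
  have P1G: "\<forall>a b c. G a b c \<noteq> 0 \<longrightarrow> d - 1 \<le> b + c"
  proof (intro allI impI)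
    fix a b c assume "G a b c \<noteq> 0"
    hence F': "F a (Suc (Suc (Suc b))) c \<noteq> 0"
      unfolding G_def by (auto dest!: dyD)
    have "a \<le> 1" using n3 F' by force
    moreover have "a + Suc (Suc (Suc b)) + c = 3 * d" using sumF[OF F'] .
    ultimately show "d - 1 \<le> b + c" using d2 by linarith
  qed
  have P2G: "\<forall>a b c. G a b c \<noteq> 0 \<longrightarrow> d - 1 \<le> a + c"
  proof (intro allI impI)
    fix a b c assume "G a b c \<noteq> 0"
    hence F': "F a (Suc (Suc (Suc b))) c \<noteq> 0"
      unfolding G_def by (auto dest!: dyD)
    show "d - 1 \<le> a + c" using P2F F' by force
  qed
  show ?thesis by (rule finish[OF hG nzG P1G P2G pmG])
qed

lemma case5:
  assumes c5: "F A B C \<noteq> 0" "3 \<le> A" and n2: "\<forall>A B C. F A B C \<noteq> 0 \<longrightarrow> \<not> (3 \<le> A \<and> 2 \<le> B)"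
  shows "\<exists>G. section_dL (d - 1) G \<and> (\<forall>q\<in>Z. mult_ge (d - 1) G q m)"
proof -
  define G where "G = dx (dx (dx F))"
  have en: "3 * d - 1 - 1 - 1 = 3 * (d - 1)" using d2 by simp
  have pmG: "\<forall>q\<in>Z. pm (3 * (d - 1)) G q (m + wt (d - 1) q)"
  proof
    fix q assume qZ: "q \<in> Z"
    have s0: "homog_poly (3 * d) F \<and> pm (3 * d) F q (m + 5 + wt d q)" using h pmF qZ by blast
    note s1 = stx[OF s0 pos(1)]
    note s2 = stx[OF s1 pos(2)]
    note s3 = stx[OF s2 pos(3)]
    have X: "pm (3 * (d - 1)) G q (m + 5 + wt d q - ddx q - ddx q - ddx q)" using s3 unfolding G_def en by blast
    show "pm (3 * (d - 1)) G q (m + wt (d - 1) q)"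
      by (rule pm_mono[OF X]) (use d2 in \<open>cases q rule: pt_cases, auto\<close>)
  qed
  have hG: "homog_poly (3 * (d - 1)) G"
  proof -
    obtain q :: S2pt where True by simp
    have s0: "homog_poly (3 * d) F \<and> pm (3 * d) F q 0" using h pm_0 by blast
    note s1 = stx[OF s0 pos(1)]
    note s2 = stx[OF s1 pos(2)]
    note s3 = stx[OF s2 pos(3)]
    show ?thesis using s3 unfolding G_def en by blast
  qed
  define A' where "A' = A - 3"
  have ABC: "A = Suc (Suc (Suc A'))" using c5 unfolding A'_def by arith
  have nzG: "G A' B C \<noteq> 0" unfolding G_def
    by (intro dxI) (use c5 ABC in simp)
  have P1G: "\<forall>a b c. G a b c \<noteq> 0 \<longrightarrow> d - 1 \<le> b + c"
  proof (intro allI impI)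
    fix a b c assume "G a b c \<noteq> 0"
    hence F': "F (Suc (Suc (Suc a))) b c \<noteq> 0"
      unfolding G_def by (auto dest!: dxD)
    show "d - 1 \<le> b + c" using P1F F' by force
  qed
  have P2G: "\<forall>a b c. G a b c \<noteq> 0 \<longrightarrow> d - 1 \<le> a + c"
  proof (intro allI impI)
    fix a b c assume "G a b c \<noteq> 0"
    hence F': "F (Suc (Suc (Suc a))) b c \<noteq> 0"
      unfolding G_def by (auto dest!: dxD)
    have "b \<le> 1" using n2 F' by force
    moreover have "Suc (Suc (Suc a)) + b + c = 3 * d" using sumF[OF F'] .
    ultimately show "d - 1 \<le> a + c" using d2 by linarith
  qed
  show ?thesis by (rule finish[OF hG nzG P1G P2G pmG])
qed

lemma case6:
  assumes nz: "F A B C \<noteq> 0" and n1: "\<forall>A B C. F A B C \<noteq> 0 \<longrightarrow> \<not> (2 \<le> A \<and> 2 \<le> B \<and> 1 \<le> C)" and n4: "\<forall>A B C. F A B C \<noteq> 0 \<longrightarrow> \<not> 3 \<le> B" and n5: "\<forall>A B C. F A B C \<noteq> 0 \<longrightarrow> \<not> 3 \<le> A"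
  shows "\<exists>G. section_dL (d - 1) G \<and> (\<forall>q\<in>Z. mult_ge (d - 1) G q m)"
proof -
  define G where "G = dz (dz (dz F))"
  have en: "3 * d - 1 - 1 - 1 = 3 * (d - 1)" using d2 by simp
  have pmG: "\<forall>q\<in>Z. pm (3 * (d - 1)) G q (m + wt (d - 1) q)"
  proof
    fix q assume qZ: "q \<in> Z"
    have s0: "homog_poly (3 * d) F \<and> pm (3 * d) F q (m + 5 + wt d q)" using h pmF qZ by blast
    note s1 = stz[OF s0 pos(1)]
    note s2 = stz[OF s1 pos(2)]
    note s3 = stz[OF s2 pos(3)]
    have X: "pm (3 * (d - 1)) G q (m + 5 + wt d q - ddz q - ddz q - ddz q)" using s3 unfolding G_def en by blast
    show "pm (3 * (d - 1)) G q (m + wt (d - 1) q)"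
      by (rule pm_mono[OF X]) (use d2 in \<open>cases q rule: pt_cases, auto\<close>)
  qed
  have hG: "homog_poly (3 * (d - 1)) G"
  proof -
    obtain q :: S2pt where True by simp
    have s0: "homog_poly (3 * d) F \<and> pm (3 * d) F q 0" using h pm_0 by blast
    note s1 = stz[OF s0 pos(1)]
    note s2 = stz[OF s1 pos(2)]
    note s3 = stz[OF s2 pos(3)]
    show ?thesis using s3 unfolding G_def en by blast
  qed
  have "A \<le> 2" "B \<le> 2" "\<not> (2 \<le> A \<and> 2 \<le> B \<and> 1 \<le> C)" using nz n1 n4 n5 by force+
  moreover have "A + B + C = 3 * d" using sumF[OF nz] .
  ultimately have "3 \<le> C" using d2 by linarith
  define C' where "C' = C - 3"
  have ABC: "C = Suc (Suc (Suc C'))" using \<open>3 \<le> C\<close> unfolding C'_def by arith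
  have nzG: "G A B C' \<noteq> 0" unfolding G_def
    by (intro dzI) (use nz ABC in simp)
  have P1G: "\<forall>a b c. G a b c \<noteq> 0 \<longrightarrow> d - 1 \<le> b + c"
  proof (intro allI impI)
    fix a b c assume "G a b c \<noteq> 0"
    hence F': "F a b (Suc (Suc (Suc c))) \<noteq> 0"
      unfolding G_def by (auto dest!: dzD)
    have "a \<le> 2" using n5 F' by force
    moreover have "a + b + Suc (Suc (Suc c)) = 3 * d" using sumF[OF F'] .
    ultimately show "d - 1 \<le> b + c" using d2 by linarith
  qed
  have P2G: "\<forall>a b c. G a b c \<noteq> 0 \<longrightarrow> d - 1 \<le> a + c"
  proof (intro allI impI)
    fix a b c assume "G a b c \<noteq> 0"
    hence F': "F a b (Suc (Suc (Suc c))) \<noteq> 0"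
      unfolding G_def by (auto dest!: dzD)
    have "b \<le> 2" using n4 F' by force
    moreover have "a + b + Suc (Suc (Suc c)) = 3 * d" using sumF[OF F'] .
    ultimately show "d - 1 \<le> a + c" using d2 by linarith
  qed
  show ?thesis by (rule finish[OF hG nzG P1G P2G pmG])
qed

end

theorem theorem5:
  fixes Z :: "S2pt set" and m :: nat
  assumes "finite Z" and "Z \<noteq> {}" and "\<forall>q\<in>Z. valid_pt q" and "m > 0"
  shows "alpha m Z < alpha (m + 5) Z"
proof -
  define P where "P k d \<longleftrightarrow> (\<exists>F. section_dL d F \<and> (\<forall>q\<in>Z. mult_ge d F q k))" for k d
  have aeq: "alpha k Z = (LEAST d. P k d)" for k by (simp add: alpha_def P_def)
  obtain N F0 where h0: "homog_poly (3 * N) F0" and nz0: "nonzero F0"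
    and P10: "mult3_ge (3 * N) F0 (1, 0, 0) N" and P20: "mult3_ge (3 * N) F0 (0, 1, 0) N"
    and Z0: "\<forall>q\<in>Z. pm (3 * N) F0 q (m + 5 + wt N q)"
    using exist[OF assms(1) assms(3), of "m + 5"] by blast
  have "P (m + 5) N"
    unfolding P_def
  proof (intro exI conjI)
    show "section_dL N F0" using h0 nz0 P10 P20 by (auto simp: section_dL_def nonzero_def)
    show "\<forall>q\<in>Z. mult_ge N F0 q (m + 5)" using Z0 by (simp add: mult_ge_pm)
  qed
  hence Pd: "P (m + 5) (alpha (m + 5) Z)" unfolding aeq by (rule LeastI)
  define d where "d = alpha (m + 5) Z"
  obtain F where sec: "section_dL d F" and mF: "\<forall>q\<in>Z. mult_ge d F q (m + 5)"
    using Pd unfolding P_def d_def by blast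
  obtain q0 where q0: "q0 \<in> Z" using assms(2) by blast
  have d2: "2 \<le> d"
  proof (rule ccontr)
    assume "\<not> 2 \<le> d"
    hence "5 * d < m + 5" using assms(4) by auto
    from no_small[OF sec mF[rule_format, OF q0] this] show False .
  qed
  have h: "homog_poly (3 * d) F" using sec by (simp add: section_dL_def)
  have P1F: "\<forall>a b c. F a b c \<noteq> 0 \<longrightarrow> d \<le> b + c"
    using sec P1_char[OF h] by (simp add: section_dL_def)
  have P2F: "\<forall>a b c. F a b c \<noteq> 0 \<longrightarrow> d \<le> a + c"
    using sec P2_char[OF h] by (simp add: section_dL_def)
  have pmF: "\<forall>q\<in>Z. pm (3 * d) F q (m + 5 + wt d q)"
    using mF by (simp add: mult_ge_pm)
  note ctx = h d2 P1F P2F pmF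
  have ex: "\<exists>G. section_dL (d - 1) G \<and> (\<forall>q\<in>Z. mult_ge (d - 1) G q m)"
  proof (cases "\<exists>A B C. F A B C \<noteq> 0 \<and> 2 \<le> A \<and> 2 \<le> B \<and> 1 \<le> C")
    case True
    then obtain A B C where "F A B C \<noteq> 0" "2 \<le> A" "2 \<le> B" "1 \<le> C" by blast
    thus ?thesis by (rule case1[OF ctx])
  next
    case n1: False
    show ?thesis
    proof (cases "\<exists>A B C. F A B C \<noteq> 0 \<and> 3 \<le> A \<and> 2 \<le> B")
      case True
      then obtain A B C where "F A B C \<noteq> 0" "3 \<le> A" "2 \<le> B" by blast
      thus ?thesis by (rule case2[OF ctx])
    next
      case n2: False
      show ?thesis
      proof (cases "\<exists>A B C. F A B C \<noteq> 0 \<and> 2 \<le> A \<and> 3 \<le> B")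
        case True
        then obtain A B C where "F A B C \<noteq> 0" "2 \<le> A" "3 \<le> B" by blast
        thus ?thesis by (rule case3[OF ctx])
      next
        case n3: False
        show ?thesis
        proof (cases "\<exists>A B C. F A B C \<noteq> 0 \<and> 3 \<le> B")
          case True
          then obtain A B C where c: "F A B C \<noteq> 0" "3 \<le> B" by blast
          have "\<forall>A B C. F A B C \<noteq> 0 \<longrightarrow> \<not> (2 \<le> A \<and> 3 \<le> B)" using n3 by blast
          from case4[OF ctx c this] show ?thesis .
        next
          case n4: False
          show ?thesis
          proof (cases "\<exists>A B C. F A B C \<noteq> 0 \<and> 3 \<le> A")
            case True
            then obtain A B C where c: "F A B C \<noteq> 0" "3 \<le> A" by blast
            have "\<forall>A B C. F A B C \<noteq> 0 \<longrightarrow> \<not> (3 \<le> A \<and> 2 \<le> B)" using n2 by blast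
            from case5[OF ctx c this] show ?thesis .
          next
            case n5: False
            obtain A B C where c: "F A B C \<noteq> 0" using sec by (auto simp: section_dL_def)
            have n1': "\<forall>A B C. F A B C \<noteq> 0 \<longrightarrow> \<not> (2 \<le> A \<and> 2 \<le> B \<and> 1 \<le> C)" using n1 by blast
            have n4': "\<forall>A B C. F A B C \<noteq> 0 \<longrightarrow> \<not> 3 \<le> B" using n4 by blast
            have n5': "\<forall>A B C. F A B C \<noteq> 0 \<longrightarrow> \<not> 3 \<le> A" using n5 by blast
            from case6[OF ctx c n1' n4' n5'] show ?thesis .
          qed
        qed
      qed
    qed
  qed
  hence "P m (d - 1)" unfolding P_def .
  hence "alpha m Z \<le> d - 1" unfolding aeq by (rule Least_le)
  thus ?thesis using d2 unfolding d_def by simp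
qed


end
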